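(* The map $\rho:\mathcal W\mapsto(\mathtt P_{\mathcal W},\mathtt Q_{\mathcal W})$ is a bijection from ${\rm Gr}^{(0)}_+$ onto $$ {\rm Gr}_{\mathcal D}:=\Big\{(\mathtt P,\mathtt Q)\in\mathcal D^2\ \Big|\ [\mathtt P,\mathtt Q]=1,\ \ \mathtt P-\partial_z\in z^{-1}\mathcal D_-,\ \ \mathtt Q-z\in\mathcal D_-\Big\}. $$ Its inverse sends $(\mathtt P,\mathtt Q)\in{\rm Gr}_{\mathcal D}$ to ${\rm span}\{\Psi,\mathtt Q\cdot\Psi,\mathtt Q^2\cdot\Psi,\dots\}$, where $\Psi$ is the unique solution of $\mathtt P\cdot\Psi=0$ lying in $1+H_-$.
   Context: Let $H_+=\mathbb C[z]$, $H_-=z^{-1}\mathbb C[[z^{-1}]]$, $H=H_+\oplus H_-=\mathbb C((z^{-1}))$. The (big cell of the) Sato Grassmannian ${\rm Gr}^{(0)}_+$ is the set of closed linear subspaces $\mathcal W\subset H$ such that the projection $\pi_+:\mathcal W\to H_+$ along $H_-$ is an isomorphism. Let $\mathcal D=\mathbb C((z^{-1}))[[\partial_z]]$ be the ring of differential operators $\sum_{m\ge0}a_m(z)\partial_z^m$ with $a_m\in H$ (product given by the Leibniz rule), acting on $H$; let $\mathcal D_\pm=H_\pm[[\partial_z]]$, so $\mathcal D=\mathcal D_+\oplus\mathcal D_-$. Let $\mathcal G=\{\mathtt G\in\mathcal D:\mathtt G-1\in\mathcal D_-\}$ (a group). Sato's theorem: for every $\mathcal W\in{\rm Gr}^{(0)}_+$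 there is a unique $\mathtt G_{\mathcal W}\in\mathcal G$ (the Sato group element) with $\mathcal W=\mathtt G_{\mathcal W}\cdot H_+$, and $\mathcal W\mapsto\mathtt G_{\mathcal W}$ is a bijection ${\rm Gr}^{(0)}_+\to\mathcal G$. The canonical Kac–Schwarz pair of $\mathcal W$ is $\mathtt P_{\mathcal W}:=\mathtt G_{\mathcal W}\,\partial_z\,\mathtt G_{\mathcal W}^{-1}$, $\mathtt Q_{\mathcal W}:=\mathtt G_{\mathcal W}\,z\,\mathtt G_{\mathcal W}^{-1}$. *)

theory Defs
  imports Complex_Main "HOL-Library.Groups_Big_Fun"
begin

text \<open>Elements of H = C((z^-1)) are coefficient functions f :: int => complex,
  f k = coefficient of z^k, with support bounded above.\<close>

type_synonym laurent = "int \<Rightarrow> complex"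

definition Hset :: "laurent set" where
  "Hset = {f. \<exists>N. \<forall>k>N. f k = 0}"

definition Hplus :: "laurent set" where
  "Hplus = {f. f \<in> Hset \<and> (\<forall>k<0. f k = 0)}"

definition Hminus :: "laurent set" where
  "Hminus = {f. \<forall>k\<ge>0. f k = 0}"

definition one_plus_Hminus :: "laurent set" where
  "one_plus_Hminus = {f. f 0 = 1 \<and> (\<forall>k>0. f k = 0)}"

definition proj_plus :: "laurent \<Rightarrow> laurent" where
  "proj_plus f = (\<lambda>k. if k \<ge> 0 then f k else 0)"

definition lin_subspace :: "laurent set \<Rightarrow> bool" where
  "lin_subspace W \<longleftrightarrow> (\<lambda>_. 0) \<in> W \<and> (\<forall>f\<in>W. \<forall>g\<in>W. (\<lambda>k. f k + g k) \<in> W)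
     \<and> (\<forall>c. \<forall>f\<in>W. (\<lambda>k. c * f k) \<in> W)"

text \<open>Closedness in the z^-1-adic topology of H: W contains every f in H which
  can be approximated by elements of W modulo z^(-N-1) C[[z^-1]] for every N.\<close>
definition closed_H :: "laurent set \<Rightarrow> bool" where
  "closed_H W \<longleftrightarrow> (\<forall>f\<in>Hset. (\<forall>N::int. \<exists>w\<in>W. \<forall>k\<ge>-N. w k = f k) \<longrightarrow> f \<in> W)"

definition Gr0 :: "laurent set set" where
  "Gr0 = {W. W \<subseteq> Hset \<and> lin_subspace W \<and> closed_H W \<and> bij_betw proj_plus W Hplus}"

text \<open>Differential operators sum_m a_m(z) d^m: A m k = coefficient of z^k d^m.\<close>
type_synonym diffop = "nat \<Rightarrow> int \<Rightarrow> complex"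

definition Dset :: "diffop set" where
  "Dset = {A. \<forall>m. A m \<in> Hset}"

definition Dminus :: "diffop set" where
  "Dminus = {A. \<forall>m k. k \<ge> 0 \<longrightarrow> A m k = 0}"

definition zinv_Dminus :: "diffop set" where
  "zinv_Dminus = {A. \<forall>m k. k \<ge> -1 \<longrightarrow> A m k = 0}"

definition D_one :: diffop where
  "D_one = (\<lambda>m k. if m = 0 \<and> k = 0 then 1 else 0)"

definition D_z :: diffop where
  "D_z = (\<lambda>m k. if m = 0 \<and> k = 1 then 1 else 0)"

definition D_del :: diffop where
  "D_del = (\<lambda>m k. if m = 1 \<and> k = 0 then 1 else 0)"

definition D_sub :: "diffop \<Rightarrow> diffop \<Rightarrow> diffop" where
  "D_sub A B = (\<lambda>m k. A m k - B m k)"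

text \<open>Coefficient of z^i in d^m f.\<close>
definition deriv_coef :: "nat \<Rightarrow> laurent \<Rightarrow> int \<Rightarrow> complex" where
  "deriv_coef m f i = (\<Prod>t<m. of_int (i + int m - int t)) * f (i + int m)"

text \<open>Action of D on H (sums have finitely many nonzero terms where used).\<close>
definition D_act :: "diffop \<Rightarrow> laurent \<Rightarrow> laurent" where
  "D_act A f = (\<lambda>l. Sum_any (\<lambda>(m::nat, k::int). A m k * deriv_coef m f (l - k)))"

text \<open>Product in D given by the Leibniz rule:
  (a d^m)(b d^n) = sum_j (m choose j) a b^(j) d^(m+n-j).\<close>
definition D_mult :: "diffop \<Rightarrow> diffop \<Rightarrow> diffop" where
  "D_mult A B = (\<lambda>p l. Sum_any (\<lambda>(m::nat, j::nat, k::int).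
      if j \<le> m \<and> m \<le> p + j
      then A m k * of_nat (m choose j) * deriv_coef j (B (p + j - m)) (l - k)
      else 0))"

primrec D_pow :: "diffop \<Rightarrow> nat \<Rightarrow> diffop" where
  "D_pow A 0 = D_one"
| "D_pow A (Suc n) = D_mult A (D_pow A n)"

definition D_comm :: "diffop \<Rightarrow> diffop \<Rightarrow> diffop" where
  "D_comm A B = D_sub (D_mult A B) (D_mult B A)"

definition Gcal :: "diffop set" where
  "Gcal = {G. G \<in> Dset \<and> D_sub G D_one \<in> Dminus}"

definition G_inv :: "diffop \<Rightarrow> diffop" where
  "G_inv G = (THE G'. G' \<in> Gcal \<and> D_mult G G' = D_one)"

definition sato :: "laurent set \<Rightarrow> diffop" where
  "sato W = (THE G. G \<in> Gcal \<and> W = D_act G ` Hplus)"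

definition KS_P :: "laurent set \<Rightarrow> diffop" where
  "KS_P W = D_mult (sato W) (D_mult D_del (G_inv (sato W)))"

definition KS_Q :: "laurent set \<Rightarrow> diffop" where
  "KS_Q W = D_mult (sato W) (D_mult D_z (G_inv (sato W)))"

definition rho :: "laurent set \<Rightarrow> diffop \<times> diffop" where
  "rho W = (KS_P W, KS_Q W)"

definition GrD :: "(diffop \<times> diffop) set" where
  "GrD = {(P, Q). P \<in> Dset \<and> Q \<in> Dset \<and> D_comm P Q = D_one
          \<and> D_sub P D_del \<in> zinv_Dminus \<and> D_sub Q D_z \<in> Dminus}"

definition lin_span :: "laurent set \<Rightarrow> laurent set" where
  "lin_span S = {x. \<exists>(n::nat) c v. (\<forall>i<n. v i \<in> S) \<and> x = (\<lambda>k. \<Sum>i<n. c i * v i k)}"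

end

theory Submission
  imports Defs
begin

definition ff :: "int \<Rightarrow> nat \<Rightarrow> complex" where
  "ff x m = (\<Prod>t<m. of_int (x - int t))"

lemma ff_0[simp]: "ff x 0 = 1" by (simp add: ff_def)
lemma ff_Suc: "ff x (Suc m) = ff x m * of_int (x - int m)"
  by (simp add: ff_def)

lemma ff_add: "ff x (n + q) = ff x n * ff (x - int n) q"
  by (induction q) (simp_all add: ff_Suc algebra_simps)

lemma ff_vander: "ff (a + b) m = (\<Sum>j\<le>m. of_nat (m choose j) * ff a j * ff b (m - j))"
proof (induction m)
  case 0 then show ?case by simp
next
  case (Suc m)
  have "ff (a + b) (Suc m) = (\<Sum>j\<le>m. of_nat (m choose j) * ff a j * ff b (m - j)) * of_int (a + b - int m)"
    by (simp add: ff_Suc Suc)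
  also have "\<dots> = (\<Sum>j\<le>m. of_nat (m choose j) * ff a (Suc j) * ff b (m - j))
     + (\<Sum>j\<le>m. of_nat (m choose j) * ff a j * ff b (Suc (m - j)))"
    unfolding sum_distrib_right sum.distrib[symmetric]
  proof (rule sum.cong[OF refl])
    fix j assume "j \<in> {..m}"
    then have j: "j \<le> m" by simp
    then have e: "Suc (m - j) = Suc m - j" by simp
    have "of_int (b - int (m - j)) = (of_int b - of_nat m + of_nat j :: complex)"
      using j by (simp add: of_nat_diff)
    then show "of_nat (m choose j) * ff a j * ff b (m - j) * of_int (a + b - int m) =
       of_nat (m choose j) * ff a (Suc j) * ff b (m - j) + of_nat (m choose j) * ff a j * ff b (Suc (m - j))"
      by (simp add: ff_Suc algebra_simps)
  qed
  also have "(\<Sum>j\<le>m. of_nat (m choose j) * ff a (Suc j) * ff b (m - j))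
     = (\<Sum>j\<le>Suc m. of_nat (m choose (j - 1)) * (if j = 0 then 0 else ff a j * ff b (Suc m - j)))"
    by (subst sum.atMost_Suc_shift) (simp add: mult.assoc)
  also have "(\<Sum>j\<le>m. of_nat (m choose j) * ff a j * ff b (Suc (m - j)))
     = (\<Sum>j\<le>Suc m. of_nat (m choose j) * ff a j * ff b (Suc m - j))"
    by (simp add: sum.atMost_Suc Suc_diff_le)
  finally have "ff (a + b) (Suc m) = (\<Sum>j\<le>Suc m. of_nat (m choose (j - 1)) * (if j = 0 then 0 else ff a j * ff b (Suc m - j)))
      + (\<Sum>j\<le>Suc m. of_nat (m choose j) * ff a j * ff b (Suc m - j))" .
  also have "\<dots> = (\<Sum>j\<le>Suc m. of_nat (Suc m choose j) * ff a j * ff b (Suc m - j))"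
    unfolding sum.distrib[symmetric]
  proof (rule sum.cong[OF refl])
    fix j show "of_nat (m choose (j - 1)) * (if j = 0 then 0 else ff a j * ff b (Suc m - j)) +
         of_nat (m choose j) * ff a j * ff b (Suc m - j) =
         of_nat (Suc m choose j) * ff a j * ff b (Suc m - j)"
      by (cases j) (simp_all add: algebra_simps)
  qed
  finally show ?case .
qed

definition bnd :: "int \<Rightarrow> diffop \<Rightarrow> bool" where
  "bnd K A \<longleftrightarrow> (\<forall>m k. K < k \<longrightarrow> A m k = 0)"
definition hb :: "int \<Rightarrow> laurent \<Rightarrow> bool" where
  "hb d f \<longleftrightarrow> (\<forall>k. d < k \<longrightarrow> f k = 0)"

lemma bndD: "bnd K A \<Longrightarrow> A m k \<noteq> 0 \<Longrightarrow> k \<le> K"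
  unfolding bnd_def by (meson not_le)
lemma hbD: "hb d f \<Longrightarrow> f k \<noteq> 0 \<Longrightarrow> k \<le> d"
  unfolding hb_def by (meson not_le)
lemma bnd_mono: "bnd K A \<Longrightarrow> K \<le> K' \<Longrightarrow> bnd K' A"
  unfolding bnd_def by auto
lemma hb_mono: "hb d f \<Longrightarrow> d \<le> d' \<Longrightarrow> hb d' f"
  unfolding hb_def by auto

lemma deriv_coef_ff: "deriv_coef m f i = ff (i + int m) m * f (i + int m)"
  by (simp add: deriv_coef_def ff_def)

lemma Sum_any_reindex_supp:
  fixes g :: "'a \<Rightarrow> 'c::comm_monoid_add" and h :: "'b \<Rightarrow> 'c"
  assumes inj: "inj_on \<phi> {x. h x \<noteq> 0}"
    and eq: "\<And>x. h x \<noteq> 0 \<Longrightarrow> g (\<phi> x) = h x"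
    and sur: "\<And>y. g y \<noteq> 0 \<Longrightarrow> \<exists>x. h x \<noteq> 0 \<and> y = \<phi> x"
  shows "Sum_any g = Sum_any h"
proof -
  have im: "\<phi> ` {x. h x \<noteq> 0} = {y. g y \<noteq> 0}"
    using eq sur by force
  have "bij_betw \<phi> {x. h x \<noteq> 0} {y. g y \<noteq> 0}"
    using inj im by (simp add: bij_betw_def)
  then have "sum g {y. g y \<noteq> 0} = sum (g \<circ> \<phi>) {x. h x \<noteq> 0}"
    by (simp add: sum.reindex_bij_betw)
  also have "\<dots> = sum h {x. h x \<noteq> 0}"
    by (rule sum.cong) (auto simp: eq)
  finally show ?thesis by (simp add: Sum_any.expand_set)
qed

lemma Sum_any_sum:
  assumes "finite S" "\<And>x. g x \<noteq> 0 \<Longrightarrow> x \<in> S"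
  shows "Sum_any g = sum g S"
  using assms by (intro Sum_any.expand_superset) auto

lemma dact_expand:
  assumes "finite S" "\<And>m k. A m k * deriv_coef m f (i - k) \<noteq> 0 \<Longrightarrow> (m, k) \<in> S"
  shows "D_act A f i = (\<Sum>(m,k)\<in>S. A m k * deriv_coef m f (i - k))"
  unfolding D_act_def by (rule Sum_any_sum) (use assms in auto)

lemma dact_term_nz:
  assumes "bnd K A" "hb d f" "A m k * deriv_coef m f (i - k) \<noteq> 0"
  shows "k \<le> K" "i - k + int m \<le> d"
  using assms bndD[OF assms(1)] hbD[OF assms(2)] by (auto simp: deriv_coef_ff)

definition box :: "int \<Rightarrow> int \<Rightarrow> int \<Rightarrow> int \<Rightarrow> (nat \<times> int) set" where
  "box l d K i = {..nat (d + K - i)} \<times> {i - d..K}"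

lemma finite_box[simp]: "finite (box l d K i)" by (simp add: box_def)

lemma dact_box:
  assumes "bnd K A" "hb d f"
  shows "D_act A f i = (\<Sum>(m,k)\<in>box 0 d K i. A m k * deriv_coef m f (i - k))"
proof (rule dact_expand)
  fix m k assume nz: "A m k * deriv_coef m f (i - k) \<noteq> 0"
  from dact_term_nz[OF assms nz] show "(m, k) \<in> box 0 d K i"
    unfolding box_def by auto
qed simp

lemma hb_dact:
  assumes "bnd K A" "hb d f"
  shows "hb (d + K) (D_act A f)"
  unfolding hb_def
proof (intro allI impI)
  fix i assume i: "d + K < i"
  have "D_act A f i = (\<Sum>(m,k)\<in>{}. A m k * deriv_coef m f (i - k))"
  proof (rule dact_expand)
    fix m k assume nz: "A m k * deriv_coef m f (i - k) \<noteq> 0"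
    from dact_term_nz[OF assms nz] i show "(m, k) \<in> {}" by auto
  qed simp
  then show "D_act A f i = 0" by simp
qed

lemma hb_Hset: "hb d f \<Longrightarrow> f \<in> Hset"
  unfolding hb_def Hset_def by auto
lemma Hset_hb: "f \<in> Hset \<Longrightarrow> \<exists>d. hb d f"
  unfolding hb_def Hset_def by auto
lemma bnd_Dset: "bnd K A \<Longrightarrow> A \<in> Dset"
  unfolding bnd_def Dset_def Hset_def by auto

lemma deriv_coef_add: "deriv_coef m (\<lambda>k. f k + g k) i = deriv_coef m f i + deriv_coef m g i"
  by (simp add: deriv_coef_def algebra_simps)
lemma deriv_coef_scale: "deriv_coef m (\<lambda>k. c * f k) i = c * deriv_coef m f i"
  by (simp add: deriv_coef_def algebra_simps)

lemma hb_add: "hb d f \<Longrightarrow> hb d g \<Longrightarrow> hb d (\<lambda>k. f k + g k)"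
  unfolding hb_def by auto
lemma hb_scale: "hb d f \<Longrightarrow> hb d (\<lambda>k. c * f k)"
  unfolding hb_def by auto

lemma dact_add:
  assumes "bnd K A" "hb d f" "hb d g"
  shows "D_act A (\<lambda>k. f k + g k) = (\<lambda>i. D_act A f i + D_act A g i)"
proof
  fix i
  show "D_act A (\<lambda>k. f k + g k) i = D_act A f i + D_act A g i"
    unfolding dact_box[OF assms(1,2)] dact_box[OF assms(1,3)] dact_box[OF assms(1) hb_add[OF assms(2,3)]]
    by (simp add: deriv_coef_add sum.distrib[symmetric] distrib_left case_prod_beta)
qed

lemma dact_scale:
  assumes "bnd K A" "hb d f"
  shows "D_act A (\<lambda>k. c * f k) = (\<lambda>i. c * D_act A f i)"
proof
  fix i
  show "D_act A (\<lambda>k. c * f k) i = c * D_act A f i"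
    unfolding dact_box[OF assms(1,2)] dact_box[OF assms(1) hb_scale[OF assms(2)]]
    by (simp add: deriv_coef_scale sum_distrib_left case_prod_beta algebra_simps)
qed

lemma dact_zero: "D_act A (\<lambda>_. 0) = (\<lambda>_. 0)"
  by (simp add: D_act_def deriv_coef_def)

lemma dact_diff:
  assumes "bnd K A" "hb d f" "hb d g"
  shows "D_act A (\<lambda>k. f k - g k) = (\<lambda>i. D_act A f i - D_act A g i)"
proof -
  have h: "hb d (\<lambda>k. (-1) * g k)" using hb_scale[OF assms(3)] .
  have "D_act A (\<lambda>k. f k - g k) = D_act A (\<lambda>k. f k + (-1) * g k)" by simp
  also have "\<dots> = (\<lambda>i. D_act A f i + D_act A (\<lambda>k. (-1) * g k) i)"
    by (rule dact_add[OF assms(1,2) h])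
  also have "\<dots> = (\<lambda>i. D_act A f i - D_act A g i)"
    unfolding dact_scale[OF assms(1,3)] by simp
  finally show ?thesis .
qed

lemma dact_sub_op:
  assumes "bnd K A" "bnd K B" "hb d f"
  shows "D_act (D_sub A B) f = (\<lambda>i. D_act A f i - D_act B f i)"
proof
  fix i
  have b: "bnd K (D_sub A B)" using assms(1,2) unfolding bnd_def D_sub_def by auto
  show "D_act (D_sub A B) f i = D_act A f i - D_act B f i"
    unfolding dact_box[OF assms(1,3)] dact_box[OF assms(2,3)] dact_box[OF b assms(3)]
    by (simp add: D_sub_def sum_subtractf[symmetric] case_prod_beta algebra_simps)
qed

definition S0 :: "diffop \<Rightarrow> diffop \<Rightarrow> nat \<Rightarrow> int \<Rightarrow> nat \<Rightarrow> nat \<Rightarrow> int \<Rightarrow> complex" where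
  "S0 A B p k2 m j k = (if j \<le> m \<and> m \<le> p + j
      then A m k * of_nat (m choose j) * deriv_coef j (B (p + j - m)) (k2 - k) else 0)"

lemma dmult_S0: "D_mult A B p k2 = Sum_any (\<lambda>(m, j, k). S0 A B p k2 m j k)"
  unfolding D_mult_def S0_def by simp

lemma S0_nz:
  assumes "bnd K1 A" "bnd K2 B" "S0 A B p k2 m j k \<noteq> 0"
  shows "j \<le> m" "m \<le> p + j" "k \<le> K1" "k2 - k + int j \<le> K2"
proof -
  from assms(3) have c: "j \<le> m \<and> m \<le> p + j" and nz: "A m k * of_nat (m choose j) * deriv_coef j (B (p + j - m)) (k2 - k) \<noteq> 0"
    unfolding S0_def by (auto split: if_splits)
  then show "j \<le> m" "m \<le> p + j" by auto
  from nz have "A m k \<noteq> 0" by auto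
  then show "k \<le> K1" using bndD[OF assms(1)] by auto
  from nz have "B (p + j - m) (k2 - k + int j) \<noteq> 0" by (auto simp: deriv_coef_ff)
  then show "k2 - k + int j \<le> K2" using bndD[OF assms(2)] by auto
qed

lemma bnd_dmult:
  assumes "bnd K1 A" "bnd K2 B"
  shows "bnd (K1 + K2) (D_mult A B)"
  unfolding bnd_def
proof (intro allI impI)
  fix p k2 assume k2: "K1 + K2 < k2"
  have "\<And>m j k. S0 A B p k2 m j k = 0"
  proof (rule ccontr)
    fix m j k assume "S0 A B p k2 m j k \<noteq> 0"
    from S0_nz[OF assms this] k2 show False by auto
  qed
  then have "(\<lambda>(m, j, k). S0 A B p k2 m j k) = (\<lambda>_. 0)" by (auto simp: fun_eq_iff)
  then show "D_mult A B p k2 = 0" unfolding dmult_S0 by simp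
qed

lemma dmult_expand:
  assumes "finite S" "\<And>m j k. S0 A B p k2 m j k \<noteq> 0 \<Longrightarrow> (m, j, k) \<in> S"
  shows "D_mult A B p k2 = (\<Sum>(m, j, k)\<in>S. S0 A B p k2 m j k)"
  unfolding dmult_S0 by (rule Sum_any_sum) (use assms in auto)

lemma composition:
  assumes A: "bnd K1 A" and B: "bnd K2 B" and f: "hb d f"
  shows "D_act (D_mult A B) f = D_act A (D_act B f)"
proof
  fix l
  define M where "M = d + K1 + K2 - l"
  define N where "N = nat M"
  define B1 where "B1 = {..N} \<times> {l - d..K1 + K2}"
  define B2 where "B2 = {..2*N} \<times> ({..N} \<times> {l - d - K2..K1})"
  define BMK where "BMK = {..N} \<times> {l - d - K2..K1}"
  define BNK where "BNK = {..N} \<times> {l - d - K1..K2}"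
  define c where "c p k2 = deriv_coef p f (l - k2)" for p k2
  define T where "T = (\<lambda>((m::nat, k::int), ((n::nat, k'::int), j::nat)).
     if j \<le> m then S0 A B (n + m - j) (k + k' - int j) m j k * c (n + m - j) (k + k' - int j) else 0)"
  have fins: "finite B1" "finite B2" "finite BMK" "finite BNK"
    unfolding B1_def B2_def BMK_def BNK_def by auto
  have AB: "bnd (K1 + K2) (D_mult A B)" by (rule bnd_dmult[OF A B])
  have cnz: "l - k2 + int p \<le> d" if "c p k2 \<noteq> 0" for p k2
    using that hbD[OF f] by (auto simp: c_def deriv_coef_ff)
  have stA: "D_act (D_mult A B) f l = (\<Sum>(p, k2)\<in>B1. D_mult A B p k2 * c p k2)"
    unfolding c_def
  proof (rule dact_expand[OF fins(1)])
    fix p k2 assume nz: "D_mult A B p k2 * deriv_coef p f (l - k2) \<noteq> 0"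
    from dact_term_nz[OF AB f nz] show "(p, k2) \<in> B1"
      unfolding B1_def N_def M_def by auto
  qed
  have stB: "D_mult A B p k2 = (\<Sum>(m, j, k)\<in>B2. S0 A B p k2 m j k)" if "(p, k2) \<in> B1" for p k2
  proof (rule dmult_expand[OF fins(2)])
    fix m j k assume nz: "S0 A B p k2 m j k \<noteq> 0"
    note h = S0_nz[OF A B nz]
    from that have "p \<le> N" "l - d \<le> k2" unfolding B1_def by auto
    with h show "(m, j, k) \<in> B2" unfolding B2_def N_def M_def by auto
  qed
  have stC: "D_act (D_mult A B) f l = Sum_any (\<lambda>((p, k2), (m, j, k)). S0 A B p k2 m j k * c p k2)"
  proof -
    have "D_act (D_mult A B) f l = (\<Sum>(p, k2)\<in>B1. (\<Sum>(m, j, k)\<in>B2. S0 A B p k2 m j k) * c p k2)"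
      unfolding stA by (rule sum.cong) (auto simp: stB)
    also have "\<dots> = (\<Sum>(p, k2)\<in>B1. (\<Sum>(m, j, k)\<in>B2. S0 A B p k2 m j k * c p k2))"
      by (simp add: sum_distrib_right case_prod_beta)
    also have "\<dots> = (\<Sum>x\<in>B1 \<times> B2. (\<lambda>((p, k2), (m, j, k)). S0 A B p k2 m j k * c p k2) x)"
      by (simp add: sum.cartesian_product case_prod_beta)
    also have "\<dots> = Sum_any (\<lambda>((p, k2), (m, j, k)). S0 A B p k2 m j k * c p k2)"
    proof -
      have supp: "((p, k2), (m, j, k)) \<in> B1 \<times> B2" if nz: "S0 A B p k2 m j k * c p k2 \<noteq> 0" for p k2 m j k
      proof -
        from nz have n1: "S0 A B p k2 m j k \<noteq> 0" and n2: "c p k2 \<noteq> 0" by auto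
        note h = S0_nz[OF A B n1] and h2 = cnz[OF n2]
        show ?thesis unfolding B1_def B2_def N_def M_def using h h2 by auto
      qed
      show ?thesis
        apply (rule Sum_any_sum[symmetric])
        using fins apply simp
        using supp by auto
    qed
    finally show ?thesis .
  qed
  have stD: "Sum_any (\<lambda>((p, k2), (m, j, k)). S0 A B p k2 m j k * c p k2) = Sum_any T"
  proof -
    define g where "g = (\<lambda>((p::nat, k2::int), (m::nat, j::nat, k::int)). S0 A B p k2 m j k * c p k2)"
    define \<phi> where "\<phi> = (\<lambda>((m::nat, k::int), ((n::nat, k'::int), j::nat)). ((n + m - j, k + k' - int j), (m, j, k)))"
    have i: "inj_on \<phi> {x. T x \<noteq> 0}"
      unfolding inj_on_def T_def \<phi>_def by (auto split: if_splits)
    have e: "g (\<phi> x) = T x" if "T x \<noteq> 0" for x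
      using that unfolding T_def g_def \<phi>_def by (auto split: prod.splits if_splits)
    have su: "\<exists>x. T x \<noteq> 0 \<and> y = \<phi> x" if nz: "g y \<noteq> 0" for y
    proof -
      obtain p k2 m j k where y: "y = ((p, k2), (m, j, k))" by (metis prod.exhaust)
      from nz y have n1: "S0 A B p k2 m j k \<noteq> 0" unfolding g_def by auto
      note h = S0_nz[OF A B n1]
      have e1: "p + j - m + m - j = p" using h by auto
      show ?thesis
        apply (rule exI[of _ "((m, k), ((p + j - m, k2 - k + int j), j))"])
        using nz h unfolding T_def y g_def \<phi>_def by (simp add: e1)
    qed
    have "Sum_any g = Sum_any T" by (rule Sum_any_reindex_supp[OF i e su])
    then show ?thesis unfolding g_def .
  qed
  have stE: "Sum_any T = (\<Sum>(m, k)\<in>BMK. \<Sum>(n, k')\<in>BNK. \<Sum>j\<le>N. T ((m, k), ((n, k'), j)))"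
  proof -
    have "Sum_any T = sum T (BMK \<times> (BNK \<times> {..N}))"
    proof (rule Sum_any_sum)
      show "finite (BMK \<times> (BNK \<times> {..N}))" using fins by auto
      fix x assume nz: "T x \<noteq> 0"
      obtain m k n k' j where x: "x = ((m, k), ((n, k'), j))" by (metis prod.exhaust)
      from nz x have jm: "j \<le> m" and n1: "S0 A B (n + m - j) (k + k' - int j) m j k \<noteq> 0"
        and n2: "c (n + m - j) (k + k' - int j) \<noteq> 0" unfolding T_def by (auto split: if_splits)
      note h = S0_nz[OF A B n1]
      have "k' \<le> K2" using h(4) by simp
      moreover have "l - k - k' + int n + int m \<le> d" using cnz[OF n2] jm by (simp add: of_nat_diff)
      ultimately show "x \<in> BMK \<times> (BNK \<times> {..N})"
        unfolding x BMK_def BNK_def N_def M_def using h jm by auto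
    qed
    also have "\<dots> = (\<Sum>(m, k)\<in>BMK. \<Sum>(n, k')\<in>BNK. \<Sum>j\<le>N. T ((m, k), ((n, k'), j)))"
      by (simp add: sum.cartesian_product case_prod_beta)
    finally show ?thesis .
  qed
  have stG: "(\<Sum>j\<le>N. T ((m, k), ((n, k'), j))) = A m k * ff (l - k + int m) m * (B n k' * deriv_coef n f (l - k + int m - k'))"
    if mk: "(m, k) \<in> BMK" for m k n k'
  proof -
    from mk have mN: "m \<le> N" unfolding BMK_def by auto
    define s where "s = l - k - k' + int n + int m"
    have "(\<Sum>j\<le>N. T ((m, k), ((n, k'), j))) = (\<Sum>j\<le>m. T ((m, k), ((n, k'), j)))"
      by (rule sum.mono_neutral_right) (use mN in \<open>auto simp: T_def\<close>)
    also have "\<dots> = (\<Sum>j\<le>m. A m k * B n k' * f s * (of_nat (m choose j) * ff k' j * ff s (n + (m - j))))"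
    proof (rule sum.cong[OF refl])
      fix j assume "j \<in> {..m}"
      then have jm: "j \<le> m" by simp
      have e1: "n + m - j + j - m = n" using jm by simp
      have e2: "k + k' - int j - k = k' - int j" by simp
      have e3: "l - (k + k' - int j) + int (n + m - j) = s" using jm by (simp add: s_def of_nat_diff)
      have e4: "n + m - j = n + (m - j)" using jm by simp
      show "T ((m, k), ((n, k'), j)) = A m k * B n k' * f s * (of_nat (m choose j) * ff k' j * ff s (n + (m - j)))"
        unfolding T_def S0_def c_def using jm
        by (simp add: e1 e2 e3 deriv_coef_ff flip: e4) (simp add: algebra_simps s_def)
    qed
    also have "\<dots> = A m k * B n k' * f s * ff s n * (\<Sum>j\<le>m. of_nat (m choose j) * ff k' j * ff (s - int n) (m - j))"
      unfolding ff_add sum_distrib_left by (rule sum.cong) (simp_all add: algebra_simps)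
    also have "\<dots> = A m k * B n k' * f s * ff s n * ff (k' + (s - int n)) m"
      by (simp add: ff_vander)
    also have "\<dots> = A m k * ff (l - k + int m) m * (B n k' * deriv_coef n f (l - k + int m - k'))"
      by (simp add: s_def deriv_coef_ff algebra_simps)
    finally show ?thesis .
  qed
  have Bf: "hb (d + K2) (D_act B f)" by (rule hb_dact[OF B f])
  have stH: "D_act A (D_act B f) l = (\<Sum>(m, k)\<in>BMK. A m k * deriv_coef m (D_act B f) (l - k))"
  proof (rule dact_expand[OF fins(3)])
    fix m k assume nz: "A m k * deriv_coef m (D_act B f) (l - k) \<noteq> 0"
    from dact_term_nz[OF A Bf nz] show "(m, k) \<in> BMK" unfolding BMK_def N_def M_def by auto
  qed
  have stI: "D_act B f (l - k + int m) = (\<Sum>(n, k')\<in>BNK. B n k' * deriv_coef n f (l - k + int m - k'))"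
    if mk: "(m, k) \<in> BMK" for m k
  proof (rule dact_expand[OF fins(4)])
    fix n k' assume nz: "B n k' * deriv_coef n f (l - k + int m - k') \<noteq> 0"
    from mk have "k \<le> K1" unfolding BMK_def by auto
    with dact_term_nz[OF B f nz] show "(n, k') \<in> BNK" unfolding BNK_def N_def M_def by auto
  qed
  show "D_act (D_mult A B) f l = D_act A (D_act B f) l"
    unfolding stC stD stE stH
  proof (rule sum.cong[OF refl])
    fix x assume x: "x \<in> BMK"
    obtain m k where xe: "x = (m, k)" by (metis prod.exhaust)
    show "(case x of (m, k) \<Rightarrow> \<Sum>(n, k')\<in>BNK. \<Sum>j\<le>N. T ((m, k), (n, k'), j)) =
          (case x of (m, k) \<Rightarrow> A m k * deriv_coef m (D_act B f) (l - k))"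
    proof -
      have "(\<Sum>(n, k')\<in>BNK. \<Sum>j\<le>N. T ((m, k), (n, k'), j))
         = (\<Sum>(n, k')\<in>BNK. A m k * ff (l - k + int m) m * (B n k' * deriv_coef n f (l - k + int m - k')))"
        by (rule sum.cong) (use x xe stG in auto)
      also have "\<dots> = A m k * ff (l - k + int m) m * D_act B f (l - k + int m)"
        unfolding stI[OF x[unfolded xe]] sum_distrib_left by (simp add: case_prod_beta)
      also have "\<dots> = A m k * deriv_coef m (D_act B f) (l - k)"
        by (simp add: deriv_coef_ff)
      finally show ?thesis unfolding xe by simp
    qed
  qed
qed

definition zp :: "nat \<Rightarrow> laurent" where
  "zp n = (\<lambda>k. if k = int n then 1 else 0)"

lemma hb_zp: "hb (int n) (zp n)"
  unfolding hb_def zp_def by auto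

lemma ff_zero: "n < m \<Longrightarrow> ff (int n) m = 0"
  unfolding ff_def by (rule prod_zero) (auto intro!: bexI[of _ n])

lemma ff_nz: "m \<le> n \<Longrightarrow> ff (int n) m \<noteq> 0"
  unfolding ff_def by (auto simp: prod_zero_iff)

lemma dact_zp:
  "D_act A (zp n) l = (\<Sum>m\<le>n. A m (l - int n + int m) * ff (int n) m)"
proof -
  have "D_act A (zp n) l = (\<Sum>(m, k)\<in>(\<lambda>m. (m, l - int n + int m)) ` {..n}. A m k * deriv_coef m (zp n) (l - k))"
  proof (rule dact_expand)
    fix m k assume nz: "A m k * deriv_coef m (zp n) (l - k) \<noteq> 0"
    then have e: "l - k + int m = int n" and f: "ff (int n) m \<noteq> 0"
      by (auto simp: deriv_coef_ff zp_def split: if_splits)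
    from f have "m \<le> n" using ff_zero by (meson not_le)
    with e show "(m, k) \<in> (\<lambda>m. (m, l - int n + int m)) ` {..n}"
      by (auto intro!: image_eqI[of _ _ m])
  qed simp
  also have "\<dots> = (\<Sum>m\<le>n. A m (l - int n + int m) * ff (int n) m)"
    by (subst sum.reindex) (auto simp: inj_on_def deriv_coef_ff zp_def)
  finally show ?thesis .
qed

lemma faithful_prefix:
  assumes "\<And>n. n \<le> N \<Longrightarrow> D_act A (zp n) = D_act B (zp n)"
  shows "m \<le> N \<Longrightarrow> A m = B m"
proof (induction m rule: less_induct)
  case (less m)
  show ?case
  proof
    fix k
    have "D_act A (zp m) k = D_act B (zp m) k" using assms less.prems by simp
    then have "(\<Sum>m'\<le>m. A m' (k - int m + int m') * ff (int m) m') = (\<Sum>m'\<le>m. B m' (k - int m + int m') * ff (int m) m')"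
      by (simp add: dact_zp)
    moreover have "(\<Sum>m'<m. A m' (k - int m + int m') * ff (int m) m') = (\<Sum>m'<m. B m' (k - int m + int m') * ff (int m) m')"
      using less by (intro sum.cong) auto
    ultimately have "A m k * ff (int m) m = B m k * ff (int m) m"
      by (simp add: lessThan_Suc_atMost[symmetric])
    then show "A m k = B m k" using ff_nz[of m m] by simp
  qed
qed

lemma faithful:
  assumes "\<And>n. D_act A (zp n) = D_act B (zp n)"
  shows "A = B"
proof
  fix m show "A m = B m" using faithful_prefix[of m A B m] assms by simp
qed

lemma dact_one: "D_act D_one f = f"
proof
  fix l
  have "(\<lambda>(m, k). D_one m k * deriv_coef m f (l - k)) = (\<lambda>x. if x = (0, 0) then f l else 0)"
    by (auto simp: fun_eq_iff D_one_def deriv_coef_def)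
  then show "D_act D_one f l = f l" unfolding D_act_def by simp
qed

lemma dact_z: "D_act D_z f = (\<lambda>l. f (l - 1))"
proof
  fix l
  have "(\<lambda>(m, k). D_z m k * deriv_coef m f (l - k)) = (\<lambda>x. if x = (0, 1) then f (l - 1) else 0)"
    by (auto simp: fun_eq_iff D_z_def deriv_coef_def)
  then show "D_act D_z f l = f (l - 1)" unfolding D_act_def by simp
qed

lemma dact_del: "D_act D_del f = (\<lambda>l. of_int (l + 1) * f (l + 1))"
proof
  fix l
  have "(\<lambda>(m, k). D_del m k * deriv_coef m f (l - k)) = (\<lambda>x. if x = (1, 0) then of_int (l + 1) * f (l + 1) else 0)"
    by (auto simp: fun_eq_iff D_del_def deriv_coef_def)
  then show "D_act D_del f l = of_int (l + 1) * f (l + 1)" unfolding D_act_def by simp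
qed

lemma bnd_one: "bnd 0 D_one" by (simp add: bnd_def D_one_def)
lemma bnd_z: "bnd 1 D_z" by (simp add: bnd_def D_z_def)
lemma bnd_del: "bnd 0 D_del" by (simp add: bnd_def D_del_def)

lemma assoc:
  assumes "bnd K1 A" "bnd K2 B" "bnd K3 C"
  shows "D_mult (D_mult A B) C = D_mult A (D_mult B C)"
proof (rule faithful)
  fix n
  have h: "hb (int n) (zp n)" by (rule hb_zp)
  have hc: "hb (int n + K3) (D_act C (zp n))" by (rule hb_dact[OF assms(3) h])
  show "D_act (D_mult (D_mult A B) C) (zp n) = D_act (D_mult A (D_mult B C)) (zp n)"
    using composition[OF bnd_dmult[OF assms(1,2)] assms(3) h] composition[OF assms(1) bnd_dmult[OF assms(2,3)] h]
      composition[OF assms(1,2) hc] composition[OF assms(2,3) h] by simp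
qed

lemma mult_one_left: "bnd K A \<Longrightarrow> D_mult D_one A = A"
  by (rule faithful) (simp add: composition[OF bnd_one _ hb_zp] dact_one)

lemma mult_one_right: "bnd K A \<Longrightarrow> D_mult A D_one = A"
  by (rule faithful) (simp add: composition[OF _ bnd_one hb_zp] dact_one)

lemma z_zp: "D_act D_z (zp n) = zp (Suc n)"
  by (auto simp: dact_z zp_def fun_eq_iff)

lemma del_zp0: "D_act D_del (zp 0) = (\<lambda>_. 0)"
  by (auto simp: dact_del zp_def fun_eq_iff simp del: of_int_add)

lemma del_zpS: "D_act D_del (zp (Suc n)) = (\<lambda>l. of_nat (Suc n) * zp n l)"
  by (auto simp: dact_del zp_def fun_eq_iff)

lemma del_z_comm: "D_act D_del (D_act D_z y) l - D_act D_z (D_act D_del y) l = y l"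
  by (simp add: dact_del dact_z algebra_simps)

lemma gcal_coef: "G \<in> Gcal \<Longrightarrow> 0 \<le> k \<Longrightarrow> G m k = D_one m k"
  unfolding Gcal_def Dminus_def D_sub_def by auto

lemma gcal_bnd: "G \<in> Gcal \<Longrightarrow> bnd 0 G"
  unfolding bnd_def by (auto simp: gcal_coef D_one_def)

lemma Sum_any_split_point:
  assumes "finite {x. h x \<noteq> 0}"
  shows "Sum_any h = h a + Sum_any (\<lambda>x. if x = a then 0 else h x)"
proof -
  have "Sum_any h = Sum_any (\<lambda>x. (if x = a then h x else 0) + (if x = a then 0 else h x))"
    by (rule Sum_any.cong) auto
  also have "\<dots> = Sum_any (\<lambda>x. if x = a then h x else 0) + Sum_any (\<lambda>x. if x = a then 0 else h x)"
    by (rule Sum_any.distrib) (auto intro: finite_subset[OF _ assms])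
  finally show ?thesis by simp
qed

lemma dact_finite:
  assumes "bnd K A" "hb d f"
  shows "finite {x. (case x of (m, k) \<Rightarrow> A m k * deriv_coef m f (i - k)) \<noteq> 0}"
proof (rule finite_subset[OF _ finite_box[of 0 d K i]])
  show "{x. (case x of (m, k) \<Rightarrow> A m k * deriv_coef m f (i - k)) \<noteq> 0} \<subseteq> box 0 d K i"
  proof
    fix x assume "x \<in> {x. (case x of (m, k) \<Rightarrow> A m k * deriv_coef m f (i - k)) \<noteq> 0}"
    then have nz0: "(case x of (m, k) \<Rightarrow> A m k * deriv_coef m f (i - k)) \<noteq> 0" by simp
    obtain m k where x: "x = (m, k)" by (metis prod.exhaust)
    from nz0 have nz: "A m k * deriv_coef m f (i - k) \<noteq> 0" unfolding x by simp
    from dact_term_nz[OF assms nz] show "x \<in> box 0 d K i" unfolding x box_def by auto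
  qed
qed

definition RG :: "diffop \<Rightarrow> laurent \<Rightarrow> int \<Rightarrow> complex" where
  "RG G g l = Sum_any (\<lambda>(m, k). if (m, k) = (0, 0) then 0 else G m k * deriv_coef m g (l - k))"

lemma gcal_split:
  assumes "G \<in> Gcal" "hb T g"
  shows "D_act G g l = g l + RG G g l"
proof -
  have "D_act G g l = (case (0::nat, 0::int) of (m, k) \<Rightarrow> G m k * deriv_coef m g (l - k))
     + Sum_any (\<lambda>x. if x = (0, 0) then 0 else (case x of (m, k) \<Rightarrow> G m k * deriv_coef m g (l - k)))"
    unfolding D_act_def by (rule Sum_any_split_point[OF dact_finite[OF gcal_bnd[OF assms(1)] assms(2)]])
  also have "\<dots> = g l + RG G g l"
  proof -
    have "G 0 0 = 1" using gcal_coef[OF assms(1), where m=0 and k=0] by (simp add: D_one_def)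
    moreover have "Sum_any (\<lambda>x. if x = (0, 0) then 0 else (case x of (m, k) \<Rightarrow> G m k * deriv_coef m g (l - k))) = RG G g l"
      unfolding RG_def by (rule Sum_any.cong) (auto split: prod.splits)
    ultimately show ?thesis by (simp add: deriv_coef_def)
  qed
  finally show ?thesis .
qed

lemma RG_local:
  assumes "G \<in> Gcal"
  shows "RG G g l = RG G (\<lambda>i. if l < i then g i else 0) l"
  unfolding RG_def
proof (rule Sum_any.cong)
  fix x :: "nat \<times> int"
  obtain m k where x: "x = (m, k)" by (metis prod.exhaust)
  show "(case x of (m, k) \<Rightarrow> if (m, k) = (0, 0) then 0 else G m k * deriv_coef m g (l - k)) =
        (case x of (m, k) \<Rightarrow> if (m, k) = (0, 0) then 0 else G m k * deriv_coef m (\<lambda>i. if l < i then g i else 0) (l - k))"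
  proof (cases "(m, k) = (0, 0) \<or> G m k = 0")
    case True then show ?thesis unfolding x by auto
  next
    case False
    have "\<not> 0 \<le> k"
    proof
      assume "0 \<le> k"
      then have "G m k = D_one m k" by (rule gcal_coef[OF assms])
      with False show False by (auto simp: D_one_def)
    qed
    then have "k < 0" by simp
    then show ?thesis unfolding x by (auto simp: deriv_coef_ff)
  qed
qed

lemma gtop:
  assumes "G \<in> Gcal" "hb T d" "\<And>i. l < i \<Longrightarrow> d i = 0"
  shows "D_act G d l = d l"
proof -
  have "RG G d l = RG G (\<lambda>i. if l < i then d i else 0) l" by (rule RG_local[OF assms(1)])
  also have "(\<lambda>i. if l < i then d i else 0) = (\<lambda>_. 0)" using assms(3) by auto
  also have "RG G (\<lambda>_. 0) l = 0"
  proof -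
    have "(\<lambda>(m, k). if (m, k) = (0, 0) then 0 else G m k * deriv_coef m (\<lambda>_. 0) (l - k)) = (\<lambda>_. 0::complex)"
      by (auto simp: fun_eq_iff deriv_coef_def)
    then show ?thesis unfolding RG_def by simp
  qed
  finally have "RG G d l = 0" .
  then show ?thesis using gcal_split[OF assms(1,2)] by simp
qed

lemma downward:
  assumes "hb T d" "\<And>l. L \<le> l \<Longrightarrow> (\<And>i. l < i \<Longrightarrow> d i = 0) \<Longrightarrow> d l = 0"
  shows "L \<le> l \<Longrightarrow> d l = 0"
proof -
  have claim: "\<forall>l. T - int n \<le> l \<and> L \<le> l \<longrightarrow> d l = 0" for n
  proof (induction n)
    case 0
    show ?case
    proof (intro allI impI)
      fix l assume l: "T - int 0 \<le> l \<and> L \<le> l"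
      show "d l = 0"
      proof (cases "l = T")
        case True
        show ?thesis
        proof (rule assms(2))
          show "L \<le> l" using l by simp
          fix i assume "l < i"
          then show "d i = 0" using assms(1) True by (auto simp: hb_def)
        qed
      next
        case False then show ?thesis using l assms(1) by (auto simp: hb_def)
      qed
    qed
  next
    case (Suc n)
    show ?case
    proof (intro allI impI)
      fix l assume l: "T - int (Suc n) \<le> l \<and> L \<le> l"
      show "d l = 0"
      proof (cases "T - int n \<le> l")
        case True then show ?thesis using Suc l by auto
      next
        case False
        show ?thesis
        proof (rule assms(2))
          show "L \<le> l" using l by simp
          fix i assume "l < i"
          show "d i = 0"
          proof (cases "L \<le> i")
            case True
            have "T - int n \<le> i" using \<open>l < i\<close> l False by simp
            with True Suc show ?thesis by auto
          next
            case False with \<open>l < i\<close> l show ?thesis by auto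
          qed
        qed
      qed
    qed
  qed
  assume "L \<le> l"
  then show "d l = 0" using claim[of "nat (T - l)"] by auto
qed

lemma ginj:
  assumes "G \<in> Gcal" "hb T d" "D_act G d = (\<lambda>_. 0)"
  shows "d = (\<lambda>_. 0)"
proof
  fix l
  show "d l = 0"
  proof (rule downward[OF assms(2), of l])
    fix l' assume "\<And>i. l' < i \<Longrightarrow> d i = 0"
    from gtop[OF assms(1,2) this] assms(3) show "d l' = 0" by (metis)
  qed simp
qed

lemma gtop_nonneg:
  assumes "G \<in> Gcal" "hb T d" "\<And>l. 0 \<le> l \<Longrightarrow> D_act G d l = 0" "0 \<le> l"
  shows "d l = 0"
proof (rule downward[OF assms(2), of 0 l])
  fix l' assume "0 \<le> l'" "\<And>i. l' < i \<Longrightarrow> d i = 0"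
  from gtop[OF assms(1,2) this(2)] assms(3)[OF this(1)] show "d l' = 0" by simp
qed (use assms in auto)

lemma nat_rec_ex: "\<exists>a. \<forall>n::nat. a n = F n (\<lambda>m. if m < n then a m else undefined)"
proof -
  define a where "a = wfrec less_than (\<lambda>f n. F n (\<lambda>m. if m < n then f m else undefined))"
  have "a n = F n (\<lambda>m. if m < n then a m else undefined)" for n
  proof -
    have "a n = F n (\<lambda>m. if m < n then cut a less_than n m else undefined)"
      unfolding a_def by (subst wfrec[OF wf_less_than]) simp
    also have "(\<lambda>m. if m < n then cut a less_than n m else undefined) = (\<lambda>m. if m < n then a m else undefined)"
      by (auto simp: fun_eq_iff cut_apply)
    finally show ?thesis .
  qed
  then show ?thesis by blast
qed

lemma int_rec_ex: "\<exists>v::int \<Rightarrow> 'a::zero. (\<forall>l. T < l \<longrightarrow> v l = 0) \<and> (\<forall>l\<le>T. v l = F l (\<lambda>i. if l < i then v i else 0))"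
proof -
  define F' where "F' = (\<lambda>n g. F (T - int n) (\<lambda>i. if T - int n < i \<and> i \<le> T then g (nat (T - i)) else 0))"
  obtain w where w: "\<And>n. w n = F' n (\<lambda>m. if m < n then w m else undefined)"
    using nat_rec_ex[of F'] by blast
  define v where "v l = (if T < l then 0 else w (nat (T - l)))" for l
  have "v l = F l (\<lambda>i. if l < i then v i else 0)" if l: "l \<le> T" for l
  proof -
    have e: "T - int (nat (T - l)) = l" using l by simp
    have "v l = F l (\<lambda>i. if l < i \<and> i \<le> T then (if nat (T - i) < nat (T - l) then w (nat (T - i)) else undefined) else 0)"
      unfolding v_def using l by (subst w) (simp add: e F'_def)
    also have "(\<lambda>i. if l < i \<and> i \<le> T then (if nat (T - i) < nat (T - l) then w (nat (T - i)) else undefined) else 0)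
       = (\<lambda>i. if l < i then v i else 0)"
      by (auto simp: v_def fun_eq_iff)
    finally show ?thesis .
  qed
  moreover have "\<forall>l. T < l \<longrightarrow> v l = 0" by (simp add: v_def)
  ultimately show ?thesis by blast
qed

lemma solve:
  assumes G: "G \<in> Gcal" and y: "hb T y"
  shows "\<exists>v. hb T v \<and> D_act G v = y"
proof -
  obtain v :: laurent where v1: "\<forall>l. T < l \<longrightarrow> v l = 0"
    and v2: "\<forall>l\<le>T. v l = (\<lambda>l g. y l - RG G g l) l (\<lambda>i. if l < i then v i else 0)"
    using int_rec_ex[of T "\<lambda>l g. y l - RG G g l"] by blast
  have hv: "hb T v" using v1 by (simp add: hb_def)
  have "D_act G v l = y l" for l
  proof (cases "T < l")
    case True
    have "hb (T + 0) (D_act G v)" by (rule hb_dact[OF gcal_bnd[OF G] hv])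
    with True y show ?thesis by (simp add: hb_def)
  next
    case False
    then have "v l = y l - RG G v l" using v2 RG_local[OF G, of v l] by simp
    then show ?thesis using gcal_split[OF G hv] by simp
  qed
  with hv show ?thesis by blast
qed

lemma rec_op:
  assumes u: "\<And>n. hb (int n) (u n)"
  shows "\<exists>a. (\<forall>n. hb (int n) (a n)) \<and> (\<forall>n. D_act a (zp n) = u n)"
proof -
  define F where "F n g = (\<lambda>l. (u n l - (\<Sum>m<n. g m (l - int n + int m) * ff (int n) m)) / ff (int n) n)"
    for n :: nat and g :: "nat \<Rightarrow> laurent"
  obtain a where a0: "\<And>n. a n = F n (\<lambda>m. if m < n then a m else undefined)"
    using nat_rec_ex[of F] by blast
  have a: "a n l = (u n l - (\<Sum>m<n. a m (l - int n + int m) * ff (int n) m)) / ff (int n) n" for n l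
    by (subst a0) (simp add: F_def)
  have hba: "hb (int n) (a n)" for n
  proof (induction n rule: less_induct)
    case (less n)
    show ?case unfolding hb_def
    proof (intro allI impI)
      fix l assume l: "int n < l"
      have z: "a m (l - int n + int m) = 0" if "m < n" for m
        using less.IH[OF that] l unfolding hb_def by simp
      have "(\<Sum>m<n. a m (l - int n + int m) * ff (int n) m) = 0"
        by (rule sum.neutral) (simp add: z)
      moreover have "u n l = 0" using u[of n] l by (simp add: hb_def)
      ultimately show "a n l = 0" using a[of n l] by simp
    qed
  qed
  have "D_act a (zp n) l = u n l" for n l
  proof -
    have "D_act a (zp n) l = (\<Sum>m<n. a m (l - int n + int m) * ff (int n) m) + a n l * ff (int n) n"
      by (simp add: dact_zp lessThan_Suc_atMost[symmetric])
    also have "\<dots> = u n l" using ff_nz[of n n] a[of n l] by simp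
    finally show ?thesis .
  qed
  with hba show ?thesis by blast
qed

definition trunc :: "nat \<Rightarrow> diffop \<Rightarrow> diffop" where
  "trunc N a = (\<lambda>m. if m \<le> N then a m else (\<lambda>_. 0))"

lemma bnd_trunc: "(\<And>m. hb (int m) (a m)) \<Longrightarrow> bnd (int N) (trunc N a)"
  unfolding bnd_def trunc_def hb_def by auto

lemma dact_trunc: "n \<le> N \<Longrightarrow> D_act (trunc N a) (zp n) = D_act a (zp n)"
  by (auto simp: fun_eq_iff dact_zp trunc_def)

lemma dact_zero_op: "D_act (\<lambda>_ _. 0) f = (\<lambda>_. 0)"
  by (simp add: D_act_def)

lemma dmult_diag:
  assumes G: "G \<in> Gcal" and B: "\<And>i l'. i < p \<Longrightarrow> 1 \<le> l' \<Longrightarrow> B i l' = 0" and l: "0 \<le> l"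
  shows "D_mult G B p l = D_act G (B p) l"
proof -
  have pw: "S0 G B p l m j k = (if j = m then G m k * deriv_coef m (B p) (l - k) else 0)" for m j k
  proof (cases "j = m")
    case True then show ?thesis by (simp add: S0_def)
  next
    case False
    show ?thesis
    proof (cases "j < m \<and> m \<le> p + j \<and> G m k \<noteq> 0")
      case True
      have "\<not> 0 \<le> k"
      proof
        assume "0 \<le> k"
        then have "G m k = D_one m k" by (rule gcal_coef[OF G])
        with True show False by (auto simp: D_one_def)
      qed
      then have "B (p + j - m) (l - k + int j) = 0" using True l by (intro B) auto
      then show ?thesis using False by (simp add: S0_def deriv_coef_ff)
    next
      case False2: False
      then show ?thesis using False by (auto simp: S0_def)
    qed
  qed
  have "D_mult G B p l = Sum_any (\<lambda>(m, j, k). if j = m then G m k * deriv_coef m (B p) (l - k) else 0)"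
    unfolding dmult_S0 pw ..
  also have "\<dots> = D_act G (B p) l"
    unfolding D_act_def
  proof (rule Sum_any_reindex_supp[where \<phi> = "\<lambda>(m, k). (m, m, k)"])
    show "inj_on (\<lambda>(m, k). (m, m, k)) {x. (case x of (m, k) \<Rightarrow> G m k * deriv_coef m (B p) (l - k)) \<noteq> 0}"
      by (auto simp: inj_on_def)
  qed (auto split: prod.splits if_splits)
  finally show ?thesis .
qed

lemma gcal_hb_mono: "G \<in> Gcal \<Longrightarrow> hb (int n) (D_act G (zp n))"
  using hb_dact[OF gcal_bnd hb_zp] by (metis add.right_neutral)

lemma gcal_ker:
  assumes G: "G \<in> Gcal" and "hb T f" "hb T g" "D_act G f = D_act G g"
  shows "f = g"
proof -
  have "D_act G (\<lambda>k. f k - g k) = (\<lambda>_. 0)"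
    using dact_diff[OF gcal_bnd[OF G] assms(2,3)] assms(4) by simp
  moreover have "hb T (\<lambda>k. f k - g k)" using assms(2,3) by (auto simp: hb_def)
  ultimately have "(\<lambda>k. f k - g k) = (\<lambda>_. 0)"
    using ginj[OF G] by blast
  then show ?thesis by (auto simp: fun_eq_iff)
qed

lemma ginv_ex:
  assumes G: "G \<in> Gcal"
  shows "\<exists>G'. G' \<in> Gcal \<and> D_mult G G' = D_one"
proof -
  have "\<forall>n. \<exists>w. hb (int n) w \<and> D_act G w = zp n"
    using solve[OF G hb_zp] by blast
  then obtain v where v: "\<And>n. hb (int n) (v n)" "\<And>n. D_act G (v n) = zp n"
    by metis
  obtain a where ha: "\<And>n. hb (int n) (a n)" and av: "\<And>n. D_act a (zp n) = v n"
    using rec_op[of v] v(1) by blast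
  have a0: "a 0 = v 0"
  proof
    fix l show "a 0 l = v 0 l" using av[of 0] by (simp add: fun_eq_iff dact_zp)
  qed
  have a00: "a 0 0 = 1"
  proof -
    have "D_act G (v 0) 0 = v 0 0" by (rule gtop[OF G v(1)]) (use v(1)[of 0] in \<open>auto simp: hb_def\<close>)
    then show ?thesis using v(2)[of 0] a0 by (simp add: zp_def)
  qed
  have pos: "N \<ge> 1 \<Longrightarrow> 0 \<le> l \<Longrightarrow> a N l = 0" for N l
  proof (induction N arbitrary: l rule: less_induct)
    case (less N)
    have Bp: "trunc N a i l' = 0" if "i < N" "1 \<le> l'" for i l'
    proof (cases "i = 0")
      case True then show ?thesis using ha[of 0] that by (auto simp: trunc_def hb_def)
    next
      case False then show ?thesis using less.IH[of i l'] that by (auto simp: trunc_def)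
    qed
    have bt: "bnd (int N) (trunc N a)" by (rule bnd_trunc[OF ha])
    have bX: "bnd (int N) (D_mult G (trunc N a))"
      using bnd_dmult[OF gcal_bnd[OF G] bt] by simp
    have b1: "bnd (int N) D_one" using bnd_mono[OF bnd_one] by simp
    have "D_sub (D_mult G (trunc N a)) D_one m = (\<lambda>_ _. 0) m" if "m \<le> N" for m
    proof (rule faithful_prefix[OF _ that])
      fix n assume n: "n \<le> N"
      show "D_act (D_sub (D_mult G (trunc N a)) D_one) (zp n) = D_act (\<lambda>_ _. 0) (zp n)"
        unfolding dact_sub_op[OF bX b1 hb_zp] composition[OF gcal_bnd[OF G] bt hb_zp]
          dact_trunc[OF n] av v(2) dact_one dact_zero_op by simp
    qed
    then have "D_mult G (trunc N a) N l' = D_one N l'" for l'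
      by (metis D_sub_def eq_iff_diff_eq_0 order_refl)
    then have z: "D_mult G (trunc N a) N l' = 0" for l' using less.prems by (simp add: D_one_def)
    have "D_act G (a N) l' = 0" if "0 \<le> l'" for l'
    proof -
      have "D_mult G (trunc N a) N l' = D_act G (trunc N a N) l'"
        by (rule dmult_diag[OF G]) (use Bp that in auto)
      then show ?thesis using z by (simp add: trunc_def)
    qed
    then show ?case by (rule gtop_nonneg[OF G ha]) (use less.prems in auto)
  qed
  have aG: "a \<in> Gcal"
    unfolding Gcal_def Dminus_def D_sub_def
  proof (intro CollectI conjI allI impI)
    show "a \<in> Dset" using ha by (auto simp: Dset_def intro: hb_Hset)
    fix m k assume k: "0 \<le> (k::int)"
    show "a m k - D_one m k = 0"
    proof (cases "m = 0")
      case True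
      then show ?thesis using ha[of 0] a00 k by (cases "k = 0") (auto simp: D_one_def hb_def)
    next
      case False then show ?thesis using pos[of m k] k by (simp add: D_one_def)
    qed
  qed
  have "D_mult G a = D_one"
  proof (rule faithful)
    fix n show "D_act (D_mult G a) (zp n) = D_act D_one (zp n)"
      by (simp add: composition[OF gcal_bnd[OF G] gcal_bnd[OF aG] hb_zp] av v(2) dact_one)
  qed
  with aG show ?thesis by blast
qed

lemma ginv:
  assumes G: "G \<in> Gcal"
  shows "G_inv G \<in> Gcal" "D_mult G (G_inv G) = D_one"
proof -
  have uniq: "G1 = G2" if "G1 \<in> Gcal" "D_mult G G1 = D_one" "G2 \<in> Gcal" "D_mult G G2 = D_one" for G1 G2
  proof (rule faithful)
    fix n
    have "D_act G (D_act G1 (zp n)) = D_act G (D_act G2 (zp n))"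
      using composition[OF gcal_bnd[OF G] gcal_bnd[OF that(1)] hb_zp]
        composition[OF gcal_bnd[OF G] gcal_bnd[OF that(3)] hb_zp] that(2,4) by simp
    then show "D_act G1 (zp n) = D_act G2 (zp n)"
      by (rule gcal_ker[OF G gcal_hb_mono[OF that(1)] gcal_hb_mono[OF that(3)]])
  qed
  have "\<exists>!G'. G' \<in> Gcal \<and> D_mult G G' = D_one"
    using ginv_ex[OF G] uniq by blast
  then have "G_inv G \<in> Gcal \<and> D_mult G (G_inv G) = D_one"
    unfolding G_inv_def by (rule theI')
  then show "G_inv G \<in> Gcal" "D_mult G (G_inv G) = D_one" by auto
qed

lemma ginv_right_act:
  assumes G: "G \<in> Gcal" and y: "hb T y"
  shows "D_act G (D_act (G_inv G) y) = y"
  using composition[OF gcal_bnd[OF G] gcal_bnd[OF ginv(1)[OF G]] y] ginv(2)[OF G] dact_one by simp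

lemma ginv_left_act:
  assumes G: "G \<in> Gcal" and y: "hb T y"
  shows "D_act (G_inv G) (D_act G y) = y"
proof -
  have h1: "hb (T + 0 + 0) (D_act (G_inv G) (D_act G y))"
    by (rule hb_dact[OF gcal_bnd[OF ginv(1)[OF G]] hb_dact[OF gcal_bnd[OF G] y]])
  have h2: "hb (T + 0 + 0) y" using y by simp
  show ?thesis
    by (rule gcal_ker[OF G h1 h2]) (rule ginv_right_act[OF G hb_dact[OF gcal_bnd[OF G] y]])
qed

lemma hb_sum: "(\<And>i. i < n \<Longrightarrow> hb T (v i)) \<Longrightarrow> hb T (\<lambda>k. \<Sum>i<n. c i * v i k)"
  unfolding hb_def by auto

lemma dact_sum:
  fixes n :: nat
  assumes A: "bnd K A"
  shows "(\<And>i. i < n \<Longrightarrow> hb T (v i)) \<Longrightarrow> D_act A (\<lambda>k. \<Sum>i<n. c i * v i k) = (\<lambda>l. \<Sum>i<n. c i * D_act A (v i) l)"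
proof (induction n)
  case 0 then show ?case by (simp add: dact_zero)
next
  case (Suc n)
  have h1: "hb T (\<lambda>k. \<Sum>i<n. c i * v i k)" by (rule hb_sum) (use Suc.prems in auto)
  have h2: "hb T (\<lambda>k. c n * v n k)" by (rule hb_scale) (use Suc.prems in auto)
  have "D_act A (\<lambda>k. \<Sum>i<Suc n. c i * v i k) = D_act A (\<lambda>k. (\<Sum>i<n. c i * v i k) + c n * v n k)"
    by simp
  also have "\<dots> = (\<lambda>l. D_act A (\<lambda>k. \<Sum>i<n. c i * v i k) l + D_act A (\<lambda>k. c n * v n k) l)"
    by (rule dact_add[OF A h1 h2])
  also have "\<dots> = (\<lambda>l. \<Sum>i<Suc n. c i * D_act A (v i) l)"
    using Suc by (simp add: dact_scale[OF A, of T "v n"])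
  finally show ?case .
qed

lemma Hplus_expand:
  assumes p: "p \<in> Hplus"
  shows "\<exists>N. p = (\<lambda>k. \<Sum>i<N. p (int i) * zp i k) \<and> (\<forall>i. N \<le> i \<longrightarrow> p (int i) = 0)"
proof -
  from p obtain T where T: "\<forall>k>T. p k = 0" and neg: "\<forall>k<0. p k = 0"
    unfolding Hplus_def Hset_def by auto
  define N where "N = nat T + 1"
  have big: "p (int i) = 0" if "N \<le> i" for i using T that by (auto simp: N_def)
  have "p k = (\<Sum>i<N. p (int i) * zp i k)" for k
  proof (cases "k < 0")
    case True then show ?thesis using neg by (auto simp: zp_def intro!: sum.neutral)
  next
    case False
    then obtain j where j: "k = int j" by (metis nonneg_eq_int not_less)
    have "(\<Sum>i<N. p (int i) * zp i k) = (\<Sum>i<N. if i = j then p (int j) else 0)"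
      by (rule sum.cong) (auto simp: zp_def j)
    also have "\<dots> = (if j < N then p (int j) else 0)" by simp
    also have "\<dots> = p k" using big[of j] j by auto
    finally show ?thesis by simp
  qed
  then have "p = (\<lambda>k. \<Sum>i<N. p (int i) * zp i k)" by (rule ext)
  then show ?thesis using big by blast
qed

lemma zp_Hplus: "zp n \<in> Hplus"
  unfolding Hplus_def Hset_def zp_def by auto

lemma hb_Hplus_poly:
  fixes n :: nat and f :: "nat \<Rightarrow> nat"
  shows "(\<lambda>k. \<Sum>i<n. c i * zp (f i) k) \<in> Hplus"
proof -
  have le: "int (f i) \<le> int (\<Sum>i<n. f i)" if "i < n" for i
  proof -
    have "f i \<le> (\<Sum>i<n. f i)" using that by (intro member_le_sum) auto
    then show ?thesis by linarith
  qed
  have "(\<Sum>i<n. c i * zp (f i) k) = 0" if "int (\<Sum>i<n. f i) < k \<or> k < 0" for k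
    by (rule sum.neutral) (use le that in \<open>fastforce simp: zp_def\<close>)
  then show ?thesis unfolding Hplus_def Hset_def by auto
qed

lemma span_eq:
  assumes G: "G \<in> Gcal"
  shows "lin_span (range (\<lambda>n. D_act G (zp n))) = D_act G ` Hplus"
proof
  show "lin_span (range (\<lambda>n. D_act G (zp n))) \<subseteq> D_act G ` Hplus"
  proof
    fix x assume "x \<in> lin_span (range (\<lambda>n. D_act G (zp n)))"
    then have "\<exists>(n::nat) c v. (\<forall>i<n. v i \<in> range (\<lambda>n. D_act G (zp n))) \<and> x = (\<lambda>k. \<Sum>i<n. c i * v i k)"
      unfolding lin_span_def by simp
    then obtain n :: nat and c v where v: "\<forall>i<n. v i \<in> range (\<lambda>n. D_act G (zp n))" and x: "x = (\<lambda>k. \<Sum>i<n. c i * v i k)"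
      by blast
    from v have "\<forall>i. \<exists>m. i < n \<longrightarrow> v i = D_act G (zp m)" by auto
    then obtain f where f: "\<And>i. i < n \<Longrightarrow> v i = D_act G (zp (f i))" by metis
    define T where "T = int (\<Sum>i<n. f i)"
    have hm: "hb T (zp (f i))" if "i < n" for i
    proof -
      have "f i \<le> (\<Sum>i<n. f i)" using that by (intro member_le_sum) auto
      then have "int (f i) \<le> T" unfolding T_def by (simp del: of_nat_sum)
      then show ?thesis using hb_zp[of "f i"] by (rule_tac hb_mono) auto
    qed
    have "x = D_act G (\<lambda>k. \<Sum>i<n. c i * zp (f i) k)"
      unfolding x using dact_sum[OF gcal_bnd[OF G] hm, where c=c] by (simp add: f)
    then show "x \<in> D_act G ` Hplus" using hb_Hplus_poly by blast
  qed
next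
  show "D_act G ` Hplus \<subseteq> lin_span (range (\<lambda>n. D_act G (zp n)))"
  proof
    fix y assume "y \<in> D_act G ` Hplus"
    then obtain p where p: "p \<in> Hplus" and y: "y = D_act G p" by auto
    obtain N where pN: "p = (\<lambda>k. \<Sum>i<N. p (int i) * zp i k)" using Hplus_expand[OF p] by blast
    have hm: "hb (int N) (zp i)" if "i < N" for i using hb_zp[of i] that by (rule_tac hb_mono) auto
    have "y = (\<lambda>l. \<Sum>i<N. p (int i) * D_act G (zp i) l)"
      unfolding y by (subst pN) (rule dact_sum[OF gcal_bnd[OF G] hm])
    then show "y \<in> lin_span (range (\<lambda>n. D_act G (zp n)))"
      unfolding lin_span_def
      by (intro CollectI exI[of _ N] exI[of _ "\<lambda>i. p (int i)"] exI[of _ "\<lambda>i. D_act G (zp i)"]) auto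
  qed
qed

lemma lin_subspace_sum:
  fixes n :: nat
  assumes W: "lin_subspace W"
  shows "(\<And>i. i < n \<Longrightarrow> v i \<in> W) \<Longrightarrow> (\<lambda>k. \<Sum>i<n. c i * v i k) \<in> W"
proof (induction n)
  case 0 then show ?case using W by (simp add: lin_subspace_def)
next
  case (Suc n)
  have a: "(\<lambda>k. \<Sum>i<n. c i * v i k) \<in> W" using Suc by auto
  have b: "(\<lambda>k. c n * v n k) \<in> W" using W Suc.prems by (simp add: lin_subspace_def)
  have "\<forall>f\<in>W. \<forall>g\<in>W. (\<lambda>k. f k + g k) \<in> W" using W unfolding lin_subspace_def by blast
  from this[rule_format, OF a b] have "(\<lambda>k. (\<Sum>i<n. c i * v i k) + c n * v n k) \<in> W" by simp
  then show ?case by simp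
qed

lemma lin_subspace_diff:
  assumes W: "lin_subspace W" "f \<in> W" "g \<in> W"
  shows "(\<lambda>k. f k - g k) \<in> W"
proof -
  have s: "\<forall>f\<in>W. \<forall>g\<in>W. (\<lambda>k. f k + g k) \<in> W" and c: "\<forall>c. \<forall>f\<in>W. (\<lambda>k. c * f k) \<in> W"
    using assms(1) unfolding lin_subspace_def by auto
  have "(\<lambda>k. (-1) * g k) \<in> W" using c assms(3) by blast
  then have "(\<lambda>k. f k + (-1) * g k) \<in> W" using s assms(2) by fastforce
  then show ?thesis by simp
qed

lemma proj_plus_Hplus: "f \<in> Hset \<Longrightarrow> proj_plus f \<in> Hplus"
  unfolding proj_plus_def Hplus_def Hset_def by auto

lemma Gr0_closed_aux:
  assumes W: "W \<subseteq> Hset" and inj: "inj_on proj_plus W"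
  shows "closed_H W"
  unfolding closed_H_def
proof (intro ballI impI)
  fix f assume f: "f \<in> Hset" and ap: "\<forall>N::int. \<exists>w\<in>W. \<forall>k\<ge>-N. w k = f k"
  then obtain w where w: "\<And>N. w N \<in> W" "\<And>N k. k \<ge> -N \<Longrightarrow> w N k = f k" by metis
  have pf: "proj_plus (w N) = proj_plus f" if "N \<ge> 0" for N
    using w(2)[of N] that by (auto simp: proj_plus_def fun_eq_iff)
  have ww: "w N = w 0" if "N \<ge> 0" for N
    using inj_onD[OF inj _ w(1) w(1)] pf[OF that] pf[of 0] by simp
  have "f k = w 0 k" for k using w(2)[of "\<bar>k\<bar>" k] ww[of "\<bar>k\<bar>"] by simp
  then have "f = w 0" by auto
  then show "f \<in> W" using w(1) by simp
qed

lemma gcal_Gr0: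
  assumes G: "G \<in> Gcal"
  shows "D_act G ` Hplus \<in> Gr0"
proof -
  define V where "V = D_act G ` Hplus"
  have bG: "bnd 0 G" by (rule gcal_bnd[OF G])
  have hbp: "\<exists>T. hb T p" if "p \<in> Hplus" for p using that Hset_hb by (auto simp: Hplus_def)
  have sub: "V \<subseteq> Hset"
  proof
    fix x assume "x \<in> V" then obtain p where p: "p \<in> Hplus" "x = D_act G p" by (auto simp: V_def)
    obtain T where "hb T p" using hbp[OF p(1)] by blast
    from hb_dact[OF bG this] p(2) show "x \<in> Hset" by (auto intro: hb_Hset)
  qed
  have addP: "(\<lambda>k. p k + q k) \<in> Hplus" if pp: "p \<in> Hplus" and qq: "q \<in> Hplus" for p q
  proof -
    obtain N1 where "\<forall>k>N1. p k = 0" using pp unfolding Hplus_def Hset_def by auto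
    moreover obtain N2 where "\<forall>k>N2. q k = 0" using qq unfolding Hplus_def Hset_def by auto
    ultimately
    have "\<forall>k>max N1 N2. p k + q k = 0" by auto
    then have "(\<lambda>k. p k + q k) \<in> Hset" unfolding Hset_def by blast
    then show ?thesis using pp qq unfolding Hplus_def by auto
  qed
  have scP: "(\<lambda>k. c * p k) \<in> Hplus" if "p \<in> Hplus" for c p
    using that unfolding Hplus_def Hset_def by auto
  have zP: "(\<lambda>_. 0) \<in> Hplus" unfolding Hplus_def Hset_def by auto
  have common: "\<exists>T. hb T p \<and> hb T q" if pp: "p \<in> Hplus" and qq: "q \<in> Hplus" for p q
  proof -
    obtain T1 T2 where "hb T1 p" "hb T2 q" using hbp[OF pp] hbp[OF qq] by blast
    then show ?thesis by (intro exI[of _ "max T1 T2"]) (auto intro: hb_mono)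
  qed
  have lin: "lin_subspace V"
    unfolding lin_subspace_def
  proof (intro conjI ballI allI)
    show "(\<lambda>_. 0) \<in> V" unfolding V_def using zP dact_zero by (metis image_eqI)
  next
    fix f g assume "f \<in> V" "g \<in> V"
    then obtain p q where pq: "p \<in> Hplus" "q \<in> Hplus" "f = D_act G p" "g = D_act G q" by (auto simp: V_def)
    obtain T where "hb T p" "hb T q" using common[OF pq(1,2)] by blast
    from dact_add[OF bG this] pq show "(\<lambda>k. f k + g k) \<in> V" unfolding V_def
      by (metis addP image_eqI)
  next
    fix c f assume "f \<in> V"
    then obtain p where p: "p \<in> Hplus" "f = D_act G p" by (auto simp: V_def)
    obtain T where "hb T p" using hbp[OF p(1)] by blast
    from dact_scale[OF bG this] p show "(\<lambda>k. c * f k) \<in> V" unfolding V_def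
      by (metis scP image_eqI)
  qed
  have inj: "inj_on proj_plus V"
  proof (rule inj_onI)
    fix x y assume "x \<in> V" "y \<in> V" and e: "proj_plus x = proj_plus y"
    then obtain p q where pq: "p \<in> Hplus" "q \<in> Hplus" "x = D_act G p" "y = D_act G q" by (auto simp: V_def)
    obtain T where T: "hb T p" "hb T q" using common[OF pq(1,2)] by blast
    have dd: "D_act G (\<lambda>k. p k - q k) = (\<lambda>l. x l - y l)" using dact_diff[OF bG T] pq by simp
    have hd: "hb T (\<lambda>k. p k - q k)" using T by (auto simp: hb_def)
    have "p k - q k = 0" for k
    proof (cases "0 \<le> k")
      case True
      have "D_act G (\<lambda>k. p k - q k) l = 0" if l0: "0 \<le> l" for l
      proof -
        have "proj_plus x l = proj_plus y l" using e by simp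
        then have "x l = y l" using l0 by (simp add: proj_plus_def)
        then show ?thesis using dd by simp
      qed
      then show ?thesis using gtop_nonneg[OF G hd _ True] by blast
    next
      case False then show ?thesis using pq(1,2) by (auto simp: Hplus_def)
    qed
    then have "p = q" by auto
    then show "x = y" using pq by simp
  qed
  have surj: "\<forall>p\<in>Hplus. hb (int N - 1) p \<longrightarrow> (\<exists>q\<in>Hplus. hb (int N - 1) q \<and> proj_plus (D_act G q) = p)" for N
  proof (induction N)
    case 0
    show ?case
    proof (intro ballI impI)
      fix p assume p: "p \<in> Hplus" "hb (int 0 - 1) p"
      have "p k = 0" for k using p by (cases "k < 0") (auto simp: Hplus_def hb_def)
      then have "p = (\<lambda>_. 0)" by auto
      then show "\<exists>q\<in>Hplus. hb (int 0 - 1) q \<and> proj_plus (D_act G q) = p"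
        using zP p(2) by (intro bexI[of _ "\<lambda>_. 0"]) (auto simp: dact_zero proj_plus_def)
    qed
  next
    case (Suc N)
    show ?case
    proof (intro ballI impI)
      fix p assume p: "p \<in> Hplus" "hb (int (Suc N) - 1) p"
      define q0 where "q0 = (\<lambda>k. p (int N) * zp N k)"
      have q0P: "q0 \<in> Hplus" unfolding q0_def by (rule scP[OF zp_Hplus])
      have hq0: "hb (int N) q0" unfolding q0_def by (rule hb_scale[OF hb_zp])
      have hGq0: "hb (int N) (D_act G q0)" using hb_dact[OF bG hq0] by simp
      have top: "D_act G q0 (int N) = p (int N)"
        by (subst gtop[OF G hq0]) (auto simp: q0_def zp_def)
      define r where "r = (\<lambda>k. p k - proj_plus (D_act G q0) k)"
      have rP: "r \<in> Hplus"
      proof -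
        have "proj_plus (D_act G q0) \<in> Hplus" by (rule proj_plus_Hplus[OF hb_Hset[OF hGq0]])
        then have "(\<lambda>k. p k + (-1) * proj_plus (D_act G q0) k) \<in> Hplus" using p(1) addP scP by blast
        then show ?thesis unfolding r_def by simp
      qed
      have hr: "hb (int N - 1) r"
        unfolding hb_def r_def
      proof (intro allI impI)
        fix k assume k: "int N - 1 < k"
        show "p k - proj_plus (D_act G q0) k = 0"
        proof (cases "k = int N")
          case True then show ?thesis using top by (simp add: proj_plus_def)
        next
          case False
          then have "int N < k" using k by simp
          then show ?thesis using p(2) hGq0 by (simp add: hb_def proj_plus_def)
        qed
      qed
      obtain q1 where q1: "q1 \<in> Hplus" "hb (int N - 1) q1" "proj_plus (D_act G q1) = r"
        using Suc rP hr by blast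
      have hq1: "hb (int N) q1" using q1(2) by (rule hb_mono) simp
      have "D_act G (\<lambda>k. q0 k + q1 k) = (\<lambda>l. D_act G q0 l + D_act G q1 l)"
        by (rule dact_add[OF bG hq0 hq1])
      then have "proj_plus (D_act G (\<lambda>k. q0 k + q1 k)) k = p k" for k
      proof (cases "0 \<le> k")
        case True
        have "proj_plus (D_act G q1) k = r k" using q1(3) by simp
        with True show ?thesis using \<open>D_act G (\<lambda>k. q0 k + q1 k) = _\<close>
          by (simp add: proj_plus_def r_def)
      next
        case False then show ?thesis using p(1) by (simp add: proj_plus_def Hplus_def)
      qed
      then have "proj_plus (D_act G (\<lambda>k. q0 k + q1 k)) = p" by auto
      moreover have "hb (int (Suc N) - 1) (\<lambda>k. q0 k + q1 k)" using hb_add[OF hq0 hq1] by simp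
      ultimately show "\<exists>q\<in>Hplus. hb (int (Suc N) - 1) q \<and> proj_plus (D_act G q) = p"
        using addP[OF q0P q1(1)] by blast
    qed
  qed
  have img: "proj_plus ` V = Hplus"
  proof
    show "proj_plus ` V \<subseteq> Hplus" using sub proj_plus_Hplus by auto
  next
    show "Hplus \<subseteq> proj_plus ` V"
    proof
      fix p assume p: "p \<in> Hplus"
      obtain T where T: "hb T p" using hbp[OF p] by blast
      have "hb (int (nat T + 1) - 1) p" using T by (rule hb_mono) simp
      with surj p obtain q where "q \<in> Hplus" "proj_plus (D_act G q) = p" by blast
      then show "p \<in> proj_plus ` V" unfolding V_def by blast
    qed
  qed
  have "closed_H V" by (rule Gr0_closed_aux[OF sub inj])
  with sub lin inj img show ?thesis
    unfolding Gr0_def V_def[symmetric] bij_betw_def by blast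
qed

lemma gr0_eq:
  assumes V: "V \<in> Gr0" and W: "W \<in> Gr0" and sub: "V \<subseteq> W"
  shows "V = W"
proof
  show "W \<subseteq> V"
  proof
    fix w assume w: "w \<in> W"
    have bV: "bij_betw proj_plus V Hplus" and bW: "bij_betw proj_plus W Hplus"
      using V W by (auto simp: Gr0_def)
    have "proj_plus w \<in> Hplus" using bW w by (auto simp: bij_betw_def)
    then have "proj_plus w \<in> proj_plus ` V" using bV by (simp add: bij_betw_def)
    then obtain v where v: "v \<in> V" "proj_plus v = proj_plus w" by (metis imageE)
    have "v = w" using bW v w sub by (auto simp: bij_betw_def inj_on_def)
    with v show "w \<in> V" by simp
  qed
qed (rule sub)

lemma gr0_parts:
  assumes "W \<in> Gr0"
  shows "W \<subseteq> Hset" "lin_subspace W" "inj_on proj_plus W" "proj_plus ` W = Hplus"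
  using assms by (auto simp: Gr0_def bij_betw_def)

lemma Hplus_add:
  assumes pp: "p \<in> Hplus" and qq: "q \<in> Hplus"
  shows "(\<lambda>k. p k + q k) \<in> Hplus"
proof -
  obtain N1 where "\<forall>k>N1. p k = 0" using pp unfolding Hplus_def Hset_def by auto
  moreover obtain N2 where "\<forall>k>N2. q k = 0" using qq unfolding Hplus_def Hset_def by auto
  ultimately have "\<forall>k>max N1 N2. p k + q k = 0" by auto
  then have "(\<lambda>k. p k + q k) \<in> Hset" unfolding Hset_def by blast
  then show ?thesis using pp qq unfolding Hplus_def by auto
qed

lemma gcal_unique:
  assumes G1: "G1 \<in> Gcal" and G2: "G2 \<in> Gcal" and eq: "D_act G1 ` Hplus = D_act G2 ` Hplus"
  shows "G1 = G2"
proof -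
  define W where "W = D_act G2 ` Hplus"
  have W: "W \<in> Gr0" unfolding W_def by (rule gcal_Gr0[OF G2])
  note Wp = gr0_parts[OF W]
  have "G1 n = G2 n" for n
  proof (induction n rule: less_induct)
    case (less n)
    define d where "d = (\<lambda>k. D_act G1 (zp n) k - D_act G2 (zp n) k)"
    have i1: "D_act G1 (zp n) \<in> W" using eq zp_Hplus unfolding W_def by blast
    have i2: "D_act G2 (zp n) \<in> W" using zp_Hplus unfolding W_def by blast
    have dW: "d \<in> W" unfolding d_def by (rule lin_subspace_diff[OF Wp(2) i1 i2])
    have dform: "d l = (G1 n l - G2 n l) * ff (int n) n" for l
    proof -
      have "(\<Sum>m<n. G1 m (l - int n + int m) * ff (int n) m) = (\<Sum>m<n. G2 m (l - int n + int m) * ff (int n) m)"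
        using less by (intro sum.cong) auto
      then show ?thesis
        by (simp add: d_def dact_zp lessThan_Suc_atMost[symmetric] algebra_simps)
    qed
    have "proj_plus d = proj_plus (\<lambda>_. 0)"
      by (auto simp: proj_plus_def fun_eq_iff dform gcal_coef[OF G1] gcal_coef[OF G2])
    moreover have "(\<lambda>_. 0) \<in> W" using Wp(2) by (simp add: lin_subspace_def)
    ultimately have "d = (\<lambda>_. 0)" using Wp(3) dW by (meson inj_onD)
    then have "(G1 n l - G2 n l) * ff (int n) n = 0" for l using dform[of l] by simp
    then show ?case using ff_nz[of n n] by (auto simp: fun_eq_iff)
  qed
  then show ?thesis by auto
qed

lemma bounds_ex: fixes n :: nat shows "(\<And>m. m < n \<Longrightarrow> \<exists>T. hb T (a m)) \<Longrightarrow> \<exists>T. \<forall>m<n. hb T (a m)"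
proof (induction n)
  case 0 then show ?case by auto
next
  case (Suc n)
  then obtain T where T: "\<forall>m<n. hb T (a m)" by auto
  obtain T' where T': "hb T' (a n)" using Suc.prems by auto
  have "\<forall>m<Suc n. hb (max T T') (a m)"
    using T T' by (auto simp: less_Suc_eq intro: hb_mono)
  then show ?case by blast
qed

lemma sato_ex:
  assumes W: "W \<in> Gr0"
  shows "\<exists>G. G \<in> Gcal \<and> W = D_act G ` Hplus"
proof -
  note Wp = gr0_parts[OF W]
  have bW: "bij_betw proj_plus W Hplus" using W by (simp add: Gr0_def)
  define inv where "inv = the_inv_into W proj_plus"
  have invW: "inv h \<in> W" if "h \<in> Hplus" for h
    unfolding inv_def using the_inv_into_into[OF Wp(3)] that Wp(4) by blast
  have invp: "proj_plus (inv h) = h" if "h \<in> Hplus" for h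
    unfolding inv_def using f_the_inv_into_f[OF Wp(3)] that Wp(4) by blast
  define F where "F n g = (let r = (\<lambda>l. \<Sum>m<n. g m (l - int n + int m) * ff (int n) m);
      t = (\<lambda>k. proj_plus r k + (if n = 0 then zp 0 k else 0)) in (\<lambda>l. (inv t l - r l) / ff (int n) n))"
    for n :: nat and g :: "nat \<Rightarrow> laurent"
  obtain a where a0: "\<And>n. a n = F n (\<lambda>m. if m < n then a m else undefined)"
    using nat_rec_ex[of F] by blast
  define r where "r n = (\<lambda>l. \<Sum>m<n. a m (l - int n + int m) * ff (int n) m)" for n
  define t where "t n = (\<lambda>k. proj_plus (r n) k + (if n = 0 then zp 0 k else 0))" for n
  have aeq: "a n = (\<lambda>l. (inv (t n) l - r n l) / ff (int n) n)" for n
  proof -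
    have "(\<lambda>l. \<Sum>m<n. (if m < n then a m else undefined) (l - int n + int m) * ff (int n) m) = r n"
      unfolding r_def by (auto intro!: sum.cong)
    then show ?thesis by (subst a0) (simp add: F_def t_def Let_def)
  qed
  have main: "a n \<in> Hset \<and> (\<forall>l\<ge>0. a n l = D_one n l)" for n
  proof (induction n rule: less_induct)
    case (less n)
    obtain T where T: "\<forall>m<n. hb T (a m)"
      using bounds_ex[of n a] less by (meson Hset_hb)
    have hr: "hb (T + int n) (r n)"
      unfolding hb_def r_def using T by (auto intro!: sum.neutral simp: hb_def)
    have rH: "r n \<in> Hset" by (rule hb_Hset[OF hr])
    have tP: "t n \<in> Hplus"
    proof -
      have "proj_plus (r n) \<in> Hplus" by (rule proj_plus_Hplus[OF rH])
      moreover have "(\<lambda>k. if n = 0 then zp 0 k else 0) \<in> Hplus"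
        using zp_Hplus by (auto simp: Hplus_def Hset_def zp_def)
      ultimately show ?thesis unfolding t_def by (rule Hplus_add)
    qed
    have iH: "inv (t n) \<in> Hset" using invW[OF tP] Wp(1) by auto
    obtain T1 where T1: "hb T1 (inv (t n))" using Hset_hb[OF iH] by blast
    have "hb (max T1 (T + int n)) (a n)"
      unfolding hb_def aeq using T1 hr by (auto simp: hb_def)
    then have "a n \<in> Hset" by (rule hb_Hset)
    moreover have "a n l = D_one n l" if l: "0 \<le> l" for l
    proof -
      have "inv (t n) l = proj_plus (inv (t n)) l" using l by (simp add: proj_plus_def)
      also have "\<dots> = t n l" using invp[OF tP] by simp
      finally have "inv (t n) l = r n l + (if n = 0 then zp 0 l else 0)"
        using l by (simp add: t_def proj_plus_def)
      then show ?thesis using l by (auto simp: aeq D_one_def zp_def)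
    qed
    ultimately show ?case by blast
  qed
  have aG: "a \<in> Gcal"
    unfolding Gcal_def Dset_def Dminus_def D_sub_def using main by auto
  have tP: "t n \<in> Hplus" for n
  proof -
    have "r n \<in> Hset"
    proof -
      obtain T where T: "\<forall>m<n. hb T (a m)"
        using bounds_ex[of n a] main by (meson Hset_hb)
      have "hb (T + int n) (r n)"
        unfolding hb_def r_def using T by (auto intro!: sum.neutral simp: hb_def)
      then show ?thesis by (rule hb_Hset)
    qed
    then have "proj_plus (r n) \<in> Hplus" by (rule proj_plus_Hplus)
    moreover have "(\<lambda>k. if n = 0 then zp 0 k else 0) \<in> Hplus"
      using zp_Hplus by (auto simp: Hplus_def Hset_def zp_def)
    ultimately show ?thesis unfolding t_def by (rule Hplus_add)
  qed
  have azW: "D_act a (zp n) \<in> W" for n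
  proof -
    have "D_act a (zp n) = inv (t n)"
    proof
      fix l
      have "D_act a (zp n) l = r n l + a n l * ff (int n) n"
        by (simp add: dact_zp lessThan_Suc_atMost[symmetric] r_def)
      also have "\<dots> = inv (t n) l" using ff_nz[of n n] by (simp add: aeq)
      finally show "D_act a (zp n) l = inv (t n) l" .
    qed
    then show ?thesis using invW[OF tP] by simp
  qed
  have sub: "D_act a ` Hplus \<subseteq> W"
  proof
    fix y assume "y \<in> D_act a ` Hplus"
    then obtain p where p: "p \<in> Hplus" "y = D_act a p" by auto
    obtain N where pN: "p = (\<lambda>k. \<Sum>i<N. p (int i) * zp i k)" using Hplus_expand[OF p(1)] by blast
    have hm: "hb (int N) (zp i)" if "i < N" for i using hb_zp[of i] that by (rule_tac hb_mono) auto
    have "y = (\<lambda>l. \<Sum>i<N. p (int i) * D_act a (zp i) l)"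
      unfolding p(2) by (subst pN) (rule dact_sum[OF gcal_bnd[OF aG] hm])
    also have "\<dots> \<in> W" by (rule lin_subspace_sum[OF Wp(2)]) (rule azW)
    finally show "y \<in> W" .
  qed
  have "D_act a ` Hplus = W" by (rule gr0_eq[OF gcal_Gr0[OF aG] W sub])
  with aG show ?thesis by blast
qed

lemma sato:
  assumes W: "W \<in> Gr0"
  shows "sato W \<in> Gcal" "W = D_act (sato W) ` Hplus"
proof -
  obtain G where G: "G \<in> Gcal" "W = D_act G ` Hplus" using sato_ex[OF W] by blast
  have "\<exists>!G. G \<in> Gcal \<and> W = D_act G ` Hplus"
  proof (rule ex1I[of _ G])
    show "G \<in> Gcal \<and> W = D_act G ` Hplus" using G by simp
    fix G' assume a: "G' \<in> Gcal \<and> W = D_act G' ` Hplus"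
    then have "D_act G' ` Hplus = D_act G ` Hplus" using G(2) by (simp only:)
    then show "G' = G" using gcal_unique[OF conjunct1[OF a] G(1)] by blast
  qed
  then have "sato W \<in> Gcal \<and> W = D_act (sato W) ` Hplus"
    unfolding sato_def by (rule theI')
  then show "sato W \<in> Gcal" "W = D_act (sato W) ` Hplus" by auto
qed

lemma sato_of:
  assumes G: "G \<in> Gcal"
  shows "sato (D_act G ` Hplus) = G"
proof -
  have "sato (D_act G ` Hplus) \<in> Gcal" "D_act G ` Hplus = D_act (sato (D_act G ` Hplus)) ` Hplus"
    using sato[OF gcal_Gr0[OF G]] by auto
  then show ?thesis using gcal_unique[OF G] by metis
qed

lemma dmult_del_left:
  "D_mult D_del B p l = (if 1 \<le> p then B (p - 1) l else 0) + of_int (l + 1) * B p (l + 1)"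
proof -
  have "D_mult D_del B p l = (\<Sum>(m, j, k)\<in>{(1, 0, 0), (1, 1, 0)}. S0 D_del B p l m j k)"
  proof (rule dmult_expand)
    fix m j k assume nz: "S0 D_del B p l m j k \<noteq> 0"
    then have "D_del m k \<noteq> 0" "j \<le> m" by (auto simp: S0_def split: if_splits)
    then show "(m, j, k) \<in> {(1, 0, 0), (1, 1, 0)}" by (auto simp: D_del_def split: if_splits)
  qed simp
  also have "\<dots> = (if 1 \<le> p then B (p - 1) l else 0) + of_int (l + 1) * B p (l + 1)"
    by (simp add: S0_def D_del_def deriv_coef_def)
  finally show ?thesis .
qed

lemma dmult_del_right:
  "D_mult A D_del p l = (if 1 \<le> p then A (p - 1) l else 0)"
proof -
  have "D_mult A D_del p l = (\<Sum>(m, j, k)\<in>{(p - 1, 0, l)}. S0 A D_del p l m j k)"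
  proof (rule dmult_expand)
    fix m j k assume nz: "S0 A D_del p l m j k \<noteq> 0"
    then have c: "j \<le> m" "m \<le> p + j" and d: "deriv_coef j (D_del (p + j - m)) (l - k) \<noteq> 0"
      by (auto simp: S0_def split: if_splits)
    from d have e: "p + j - m = 1" "l - k + int j = 0" and f: "ff 0 j \<noteq> 0"
      by (auto simp: deriv_coef_ff D_del_def split: if_splits)
    from f have "j = 0" using ff_zero[of 0 j] by (cases j) auto
    with c e show "(m, j, k) \<in> {(p - 1, 0, l)}" by auto
  qed simp
  also have "\<dots> = (if 1 \<le> p then A (p - 1) l else 0)"
    by (cases p) (simp_all add: S0_def D_del_def deriv_coef_def)
  finally show ?thesis .
qed

lemma dmult_z_left: "D_mult D_z B p l = B p (l - 1)"
proof -
  have "D_mult D_z B p l = (\<Sum>(m, j, k)\<in>{(0, 0, 1)}. S0 D_z B p l m j k)"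
  proof (rule dmult_expand)
    fix m j k assume nz: "S0 D_z B p l m j k \<noteq> 0"
    then have "D_z m k \<noteq> 0" "j \<le> m" by (auto simp: S0_def split: if_splits)
    then show "(m, j, k) \<in> {(0, 0, 1)}" by (auto simp: D_z_def split: if_splits)
  qed simp
  also have "\<dots> = B p (l - 1)" by (simp add: S0_def D_z_def deriv_coef_def)
  finally show ?thesis .
qed

lemma dmult_z_right:
  "D_mult A D_z p l = A p (l - 1) + of_nat (p + 1) * A (p + 1) l"
proof -
  have "D_mult A D_z p l = (\<Sum>(m, j, k)\<in>{(p, 0, l - 1), (p + 1, 1, l)}. S0 A D_z p l m j k)"
  proof (rule dmult_expand)
    fix m j k assume nz: "S0 A D_z p l m j k \<noteq> 0"
    then have c: "j \<le> m" "m \<le> p + j" and d: "deriv_coef j (D_z (p + j - m)) (l - k) \<noteq> 0"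
      by (auto simp: S0_def split: if_splits)
    from d have e: "p + j - m = 0" "l - k + int j = 1" and f: "ff 1 j \<noteq> 0"
      by (auto simp: deriv_coef_ff D_z_def split: if_splits)
    from f have "j \<le> 1" using ff_zero[of 1 j] by (cases "j \<le> 1") auto
    with c e show "(m, j, k) \<in> {(p, 0, l - 1), (p + 1, 1, l)}"
      by (cases j) auto
  qed simp
  also have "\<dots> = A p (l - 1) + of_nat (p + 1) * A (p + 1) l"
    by (simp add: S0_def D_z_def deriv_coef_def)
  finally show ?thesis .
qed

definition PP :: "diffop \<Rightarrow> diffop" where "PP G = D_mult G (D_mult D_del (G_inv G))"
definition QQ :: "diffop \<Rightarrow> diffop" where "QQ G = D_mult G (D_mult D_z (G_inv G))"

lemma bnd_pow: "bnd K Q \<Longrightarrow> bnd (int n * K) (D_pow Q n)"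
proof (induction n)
  case 0 then show ?case using bnd_one by simp
next
  case (Suc n)
  have "bnd (K + int n * K) (D_pow Q (Suc n))" using bnd_dmult[OF Suc.prems Suc.IH[OF Suc.prems]] by simp
  then show ?case by (simp add: algebra_simps)
qed

context
  fixes G :: diffop
  assumes G: "G \<in> Gcal"
begin

abbreviation "G' \<equiv> G_inv G"

lemma bG: "bnd 0 G" by (rule gcal_bnd[OF G])
lemma bG': "bnd 0 G'" by (rule gcal_bnd[OF ginv(1)[OF G]])

lemma bnd_PP: "bnd 0 (PP G)"
  using bnd_dmult[OF bG bnd_dmult[OF bnd_del bG']] by (simp add: PP_def)
lemma bnd_QQ: "bnd 1 (QQ G)"
  using bnd_dmult[OF bG bnd_dmult[OF bnd_z bG']] by (simp add: QQ_def)

lemma PP_act: "hb T x \<Longrightarrow> D_act (PP G) x = D_act G (D_act D_del (D_act G' x))"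
  unfolding PP_def
  by (simp add: composition[OF bG bnd_dmult[OF bnd_del bG']] composition[OF bnd_del bG'])

lemma QQ_act: "hb T x \<Longrightarrow> D_act (QQ G) x = D_act G (D_act D_z (D_act G' x))"
  unfolding QQ_def
  by (simp add: composition[OF bG bnd_dmult[OF bnd_z bG']] composition[OF bnd_z bG'])

lemma PP_G: "hb T y \<Longrightarrow> D_act (PP G) (D_act G y) = D_act G (D_act D_del y)"
  using PP_act[OF hb_dact[OF bG]] ginv_left_act[OF G] by simp

lemma QQ_G: "hb T y \<Longrightarrow> D_act (QQ G) (D_act G y) = D_act G (D_act D_z y)"
  using QQ_act[OF hb_dact[OF bG]] ginv_left_act[OF G] by simp

lemma comm_PQ: "D_comm (PP G) (QQ G) = D_one"
proof (rule faithful)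
  fix n
  define x where "x = zp n"
  define y where "y = D_act G' x"
  have hx: "hb (int n) x" unfolding x_def by (rule hb_zp)
  have hy: "hb (int n) y" unfolding y_def using hb_dact[OF bG' hx] by simp
  have xy: "x = D_act G y" unfolding y_def by (rule ginv_right_act[OF G hx, symmetric])
  have hzy: "hb (int n + 1) (D_act D_z y)" by (rule hb_dact[OF bnd_z hy])
  have hdy: "hb (int n + 0) (D_act D_del y)" by (rule hb_dact[OF bnd_del hy])
  have hdzy: "hb (int n + 1 + 0) (D_act D_del (D_act D_z y))" by (rule hb_dact[OF bnd_del hzy])
  have hzdy: "hb (int n + 0 + 1) (D_act D_z (D_act D_del y))" by (rule hb_dact[OF bnd_z hdy])
  have hdzy': "hb (int n + 1) (D_act D_del (D_act D_z y))" using hdzy by simp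
  have hzdy': "hb (int n + 1) (D_act D_z (D_act D_del y))" using hzdy by simp
  have b1: "bnd 1 (D_mult (PP G) (QQ G))" using bnd_dmult[OF bnd_PP bnd_QQ] by simp
  have b2: "bnd 1 (D_mult (QQ G) (PP G))" using bnd_dmult[OF bnd_QQ bnd_PP] by simp
  have "D_act (D_comm (PP G) (QQ G)) x = (\<lambda>l. D_act (D_mult (PP G) (QQ G)) x l - D_act (D_mult (QQ G) (PP G)) x l)"
    unfolding D_comm_def by (rule dact_sub_op[OF b1 b2 hx])
  also have "\<dots> = (\<lambda>l. D_act G (D_act D_del (D_act D_z y)) l - D_act G (D_act D_z (D_act D_del y)) l)"
    unfolding composition[OF bnd_PP bnd_QQ hx] composition[OF bnd_QQ bnd_PP hx]
    unfolding xy QQ_G[OF hy] PP_G[OF hy] QQ_G[OF hdy] PP_G[OF hzy] ..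
  also have "\<dots> = D_act G (\<lambda>l. D_act D_del (D_act D_z y) l - D_act D_z (D_act D_del y) l)"
    by (rule dact_diff[OF bG hdzy' hzdy', symmetric])
  also have "\<dots> = D_act G y" by (simp add: del_z_comm)
  also have "\<dots> = D_act D_one x" by (simp add: dact_one xy)
  finally show "D_act (D_comm (PP G) (QQ G)) (zp n) = D_act D_one (zp n)" unfolding x_def .
qed

lemma PP_cond: "D_sub (PP G) D_del \<in> zinv_Dminus"
proof -
  define C where "C = D_sub (D_mult G D_del) (D_mult D_del G)"
  have Cf: "C p l = - (of_int (l + 1) * G p (l + 1))" for p l
    by (simp add: C_def D_sub_def dmult_del_left dmult_del_right)
  have bC: "bnd (-2) C"
    unfolding bnd_def
  proof (intro allI impI)
    fix p l assume l: "-2 < (l::int)"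
    show "C p l = 0"
    proof (cases "l = -1")
      case True then show ?thesis by (simp add: Cf)
    next
      case False
      then have "0 \<le> l + 1" "l + 1 \<noteq> 0" using l by auto
      then show ?thesis by (simp add: Cf gcal_coef[OF G] D_one_def)
    qed
  qed
  have b0a: "bnd 0 (D_mult G D_del)" using bnd_dmult[OF bG bnd_del] by simp
  have b0b: "bnd 0 (D_mult D_del G)" using bnd_dmult[OF bnd_del bG] by simp
  have "D_sub (PP G) D_del = D_mult C G'"
  proof (rule faithful)
    fix n
    define x where "x = zp n"
    define y where "y = D_act G' x"
    have hx: "hb (int n) x" unfolding x_def by (rule hb_zp)
    have hy: "hb (int n) y" unfolding y_def using hb_dact[OF bG' hx] by simp
    have xy: "x = D_act G y" unfolding y_def by (rule ginv_right_act[OF G hx, symmetric])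
    have "D_act (D_sub (PP G) D_del) x = (\<lambda>l. D_act (PP G) x l - D_act D_del x l)"
      by (rule dact_sub_op[OF bnd_PP bnd_del hx])
    also have "\<dots> = (\<lambda>l. D_act G (D_act D_del y) l - D_act D_del (D_act G y) l)"
      using PP_G[OF hy] xy by simp
    also have "\<dots> = D_act C y"
      unfolding C_def dact_sub_op[OF b0a b0b hy] composition[OF bG bnd_del hy] composition[OF bnd_del bG hy] ..
    also have "\<dots> = D_act (D_mult C G') x"
      unfolding composition[OF bC bG' hx] y_def ..
    finally show "D_act (D_sub (PP G) D_del) (zp n) = D_act (D_mult C G') (zp n)" unfolding x_def .
  qed
  moreover have "bnd (-2) (D_mult C G')" using bnd_dmult[OF bC bG'] by simp
  ultimately show ?thesis by (simp add: zinv_Dminus_def bnd_def)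
qed

lemma QQ_cond: "D_sub (QQ G) D_z \<in> Dminus"
proof -
  define C where "C = D_sub (D_mult G D_z) (D_mult D_z G)"
  have Cf: "C p l = of_nat (p + 1) * G (p + 1) l" for p l
    by (simp add: C_def D_sub_def dmult_z_left dmult_z_right)
  have bC: "bnd (-1) C"
    unfolding bnd_def by (auto simp: Cf gcal_coef[OF G] D_one_def)
  have b1a: "bnd 1 (D_mult G D_z)" using bnd_dmult[OF bG bnd_z] by simp
  have b1b: "bnd 1 (D_mult D_z G)" using bnd_dmult[OF bnd_z bG] by simp
  have "D_sub (QQ G) D_z = D_mult C G'"
  proof (rule faithful)
    fix n
    define x where "x = zp n"
    define y where "y = D_act G' x"
    have hx: "hb (int n) x" unfolding x_def by (rule hb_zp)
    have hy: "hb (int n) y" unfolding y_def using hb_dact[OF bG' hx] by simp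
    have xy: "x = D_act G y" unfolding y_def by (rule ginv_right_act[OF G hx, symmetric])
    have "D_act (D_sub (QQ G) D_z) x = (\<lambda>l. D_act (QQ G) x l - D_act D_z x l)"
      by (rule dact_sub_op[OF bnd_QQ bnd_z hx])
    also have "\<dots> = (\<lambda>l. D_act G (D_act D_z y) l - D_act D_z (D_act G y) l)"
      using QQ_G[OF hy] xy by simp
    also have "\<dots> = D_act C y"
      unfolding C_def dact_sub_op[OF b1a b1b hy] composition[OF bG bnd_z hy] composition[OF bnd_z bG hy] ..
    also have "\<dots> = D_act (D_mult C G') x"
      unfolding composition[OF bC bG' hx] y_def ..
    finally show "D_act (D_sub (QQ G) D_z) (zp n) = D_act (D_mult C G') (zp n)" unfolding x_def .
  qed
  moreover have "bnd (-1) (D_mult C G')" using bnd_dmult[OF bC bG'] by simp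
  ultimately show ?thesis by (simp add: Dminus_def bnd_def)
qed

lemma PQ_GrD: "(PP G, QQ G) \<in> GrD"
  unfolding GrD_def using bnd_Dset[OF bnd_PP] bnd_Dset[OF bnd_QQ] comm_PQ PP_cond QQ_cond by auto

lemma psi_fwd: "D_act G (zp 0) \<in> one_plus_Hminus"
proof -
  have e: "D_act G (zp 0) l = G 0 l" for l by (simp add: dact_zp)
  show ?thesis unfolding one_plus_Hminus_def by (auto simp: e gcal_coef[OF G] D_one_def)
qed

lemma psi_fwd_ker: "D_act (PP G) (D_act G (zp 0)) = (\<lambda>_. 0)"
  by (simp add: PP_G[OF hb_zp] del_zp0 dact_zero)

lemma pow_fwd: "D_act (D_pow (QQ G) n) (D_act G (zp 0)) = D_act G (zp n)"
proof (induction n)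
  case 0 then show ?case by (simp add: dact_one)
next
  case (Suc n)
  have h0: "hb (int 0 + 0) (D_act G (zp 0))" by (rule hb_dact[OF bG hb_zp])
  have "D_act (D_pow (QQ G) (Suc n)) (D_act G (zp 0)) = D_act (QQ G) (D_act (D_pow (QQ G) n) (D_act G (zp 0)))"
    by (simp add: composition[OF bnd_QQ bnd_pow[OF bnd_QQ] h0])
  also have "\<dots> = D_act G (zp (Suc n))" by (simp add: Suc QQ_G[OF hb_zp] z_zp)
  finally show ?case .
qed

end

context
  fixes P Q :: diffop
  assumes PQ: "(P, Q) \<in> GrD"
begin

lemma P_coef: "-1 \<le> k \<Longrightarrow> P m k = D_del m k"
  using PQ unfolding GrD_def zinv_Dminus_def D_sub_def by auto
lemma Q_coef: "0 \<le> k \<Longrightarrow> Q m k = D_z m k"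
  using PQ unfolding GrD_def Dminus_def D_sub_def by auto
lemma bP: "bnd 0 P" unfolding bnd_def by (auto simp: P_coef D_del_def)
lemma bQ: "bnd 1 Q" unfolding bnd_def by (auto simp: Q_coef D_z_def)
lemma comm: "D_comm P Q = D_one" using PQ unfolding GrD_def by auto

definition RP :: "laurent \<Rightarrow> int \<Rightarrow> complex" where
  "RP g l = Sum_any (\<lambda>(m, k). if k \<le> -2 then P m k * deriv_coef m g (l - 1 - k) else 0)"

lemma P_split:
  assumes "hb T g"
  shows "D_act P g (l - 1) = of_int l * g l + RP g l"
proof -
  have "D_act P g (l - 1) = (case (1::nat, 0::int) of (m, k) \<Rightarrow> P m k * deriv_coef m g (l - 1 - k))
     + Sum_any (\<lambda>x. if x = (1, 0) then 0 else (case x of (m, k) \<Rightarrow> P m k * deriv_coef m g (l - 1 - k)))"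
    unfolding D_act_def by (rule Sum_any_split_point[OF dact_finite[OF bP assms]])
  also have "\<dots> = of_int l * g l + RP g l"
  proof -
    have "P 1 0 = 1" using P_coef[of 0 1] by (simp add: D_del_def)
    moreover have "Sum_any (\<lambda>x. if x = (1, 0) then 0 else (case x of (m, k) \<Rightarrow> P m k * deriv_coef m g (l - 1 - k))) = RP g l"
      unfolding RP_def
    proof (rule Sum_any.cong)
      fix x :: "nat \<times> int"
      obtain m k where x: "x = (m, k)" by (metis prod.exhaust)
      show "(if x = (1, 0) then 0 else (case x of (m, k) \<Rightarrow> P m k * deriv_coef m g (l - 1 - k))) =
         (case x of (m, k) \<Rightarrow> if k \<le> -2 then P m k * deriv_coef m g (l - 1 - k) else 0)"
        unfolding x using P_coef[of k m] by (auto simp: D_del_def)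
    qed
    ultimately show ?thesis by (simp add: deriv_coef_def)
  qed
  finally show ?thesis .
qed

lemma RP_local: "RP g l = RP (\<lambda>i. if l < i then g i else 0) l"
  unfolding RP_def by (rule Sum_any.cong) (auto simp: deriv_coef_ff split: prod.splits)

lemma RP_zero: "RP (\<lambda>_. 0) l = 0"
proof -
  have "(\<lambda>(m, k). if k \<le> -2 then P m k * deriv_coef m (\<lambda>_. 0) (l - 1 - k) else 0) = (\<lambda>_. 0::complex)"
    by (auto simp: fun_eq_iff deriv_coef_def)
  then show ?thesis unfolding RP_def by simp
qed

lemma ohm_hb: "\<Psi> \<in> one_plus_Hminus \<Longrightarrow> hb 0 \<Psi>"
  unfolding one_plus_Hminus_def hb_def by auto

lemma psi_ex: "\<exists>\<Psi>. \<Psi> \<in> one_plus_Hminus \<and> D_act P \<Psi> = (\<lambda>_. 0)"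
proof -
  obtain v :: laurent where v1: "\<forall>l. 0 < l \<longrightarrow> v l = 0"
    and v2: "\<forall>l\<le>0. v l = (\<lambda>l g. if l = 0 then 1 else - RP g l / of_int l) l (\<lambda>i. if l < i then v i else 0)"
    using int_rec_ex[of 0 "\<lambda>l g. if l = 0 then 1 else - RP g l / of_int l"] by blast
  have hv: "hb 0 v" using v1 by (simp add: hb_def)
  have v0: "v 0 = 1" using v2 by simp
  have vl: "v l = - RP v l / of_int l" if "l < 0" for l
    using v2 that RP_local[of v l] by simp
  have "D_act P v j = 0" for j
  proof -
    define l where "l = j + 1"
    have j: "j = l - 1" by (simp add: l_def)
    have "D_act P v j = of_int l * v l + RP v l" unfolding j by (rule P_split[OF hv])
    also have "\<dots> = 0"
    proof (cases "l < 0")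
      case True then show ?thesis using vl[OF True] by (simp add: field_simps)
    next
      case False
      have "(\<lambda>i. if l < i then v i else 0) = (\<lambda>_. 0)" using v1 False by auto
      then have "RP v l = 0" using RP_local[of v l] RP_zero by simp
      moreover have "of_int l * v l = 0" using False v1 by (cases "l = 0") auto
      ultimately show ?thesis by simp
    qed
    finally show ?thesis .
  qed
  moreover have "v \<in> one_plus_Hminus" unfolding one_plus_Hminus_def using v0 v1 by auto
  ultimately show ?thesis by auto
qed

lemma psi_unique:
  assumes "\<Psi>1 \<in> one_plus_Hminus" "D_act P \<Psi>1 = (\<lambda>_. 0)" "\<Psi>2 \<in> one_plus_Hminus" "D_act P \<Psi>2 = (\<lambda>_. 0)"
  shows "\<Psi>1 = \<Psi>2"
proof -
  define d where "d = (\<lambda>k. \<Psi>1 k - \<Psi>2 k)"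
  have h1: "hb 0 \<Psi>1" "hb 0 \<Psi>2" using assms ohm_hb by auto
  have hd: "hb 0 d" using h1 by (auto simp: hb_def d_def)
  have Pd: "D_act P d = (\<lambda>_. 0)" unfolding d_def dact_diff[OF bP h1] using assms by simp
  have d0: "d 0 = 0" using assms by (simp add: d_def one_plus_Hminus_def)
  have "d l = 0" for l
  proof (rule downward[OF hd, of l l])
    fix l' assume up: "\<And>i. l' < i \<Longrightarrow> d i = 0"
    show "d l' = 0"
    proof (cases "l' < 0")
      case True
      have "(\<lambda>i. if l' < i then d i else 0) = (\<lambda>_. 0)" using up by auto
      then have "RP d l' = 0" using RP_local[of d l'] RP_zero by simp
      then have "of_int l' * d l' = 0" using P_split[OF hd, of l'] Pd by (metis add.right_neutral)
      then show ?thesis using True by simp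
    next
      case False then show ?thesis using hd d0 by (cases "l' = 0") (auto simp: hb_def)
    qed
  qed simp
  then show ?thesis by (auto simp: d_def fun_eq_iff)
qed

lemma PQ_act: "hb T x \<Longrightarrow> D_act P (D_act Q x) = (\<lambda>l. D_act Q (D_act P x) l + x l)"
proof -
  assume hx: "hb T x"
  have b1: "bnd 1 (D_mult P Q)" using bnd_dmult[OF bP bQ] by simp
  have b2: "bnd 1 (D_mult Q P)" using bnd_dmult[OF bQ bP] by simp
  have "x = D_act (D_comm P Q) x" by (simp add: comm dact_one)
  also have "\<dots> = (\<lambda>l. D_act P (D_act Q x) l - D_act Q (D_act P x) l)"
    unfolding D_comm_def dact_sub_op[OF b1 b2 hx] composition[OF bP bQ hx] composition[OF bQ bP hx] ..
  finally have "x = (\<lambda>l. D_act P (D_act Q x) l - D_act Q (D_act P x) l)" .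
  then show ?thesis by (auto simp: fun_eq_iff algebra_simps)
qed

lemma dmult_Q_left:
  assumes B: "\<And>i l'. i \<le> p \<Longrightarrow> 1 \<le> l' \<Longrightarrow> B i l' = 0" and l: "0 \<le> l"
  shows "D_mult Q B p l = B p (l - 1)"
proof -
  have pw: "S0 Q B p l m j k = (if (m, j, k) = (0, 0, 1) then B p (l - 1) else 0)" for m j k
  proof (cases "(m, j, k) = (0, 0, 1)")
    case True then show ?thesis using Q_coef[of 1 0] by (simp add: S0_def D_z_def deriv_coef_def)
  next
    case False
    show ?thesis
    proof (cases "j \<le> m \<and> m \<le> p + j \<and> Q m k \<noteq> 0")
      case True
      have "\<not> 0 \<le> k"
      proof
        assume "0 \<le> k"
        then have "Q m k = D_z m k" by (rule Q_coef)
        with True have "m = 0" "k = 1" by (auto simp: D_z_def split: if_splits)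
        with True False show False by auto
      qed
      then have "B (p + j - m) (l - k + int j) = 0" using True l by (intro B) auto
      then show ?thesis using False by (auto simp: S0_def deriv_coef_ff)
    next
      case False2: False
      then show ?thesis using False by (auto simp: S0_def)
    qed
  qed
  have "(\<lambda>(m, j, k). if (m, j, k) = (0::nat, 0::nat, 1::int) then B p (l - 1) else 0)
      = (\<lambda>x. if x = (0, 0, 1) then B p (l - 1) else 0)" by (auto simp: fun_eq_iff)
  then show ?thesis unfolding dmult_S0 pw by simp
qed

definition uu :: "laurent \<Rightarrow> nat \<Rightarrow> laurent" where
  "uu \<Psi> n = D_act (D_pow Q n) \<Psi>"

lemma uu_hb: "hb 0 \<Psi> \<Longrightarrow> hb (int n) (uu \<Psi> n)"
  unfolding uu_def using hb_dact[OF bnd_pow[OF bQ] ] by fastforce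

lemma uu_Suc: "hb 0 \<Psi> \<Longrightarrow> uu \<Psi> (Suc n) = D_act Q (uu \<Psi> n)"
  unfolding uu_def by (simp add: composition[OF bQ bnd_pow[OF bQ]])

lemma uu_P:
  assumes "\<Psi> \<in> one_plus_Hminus" "D_act P \<Psi> = (\<lambda>_. 0)"
  shows "D_act P (uu \<Psi> 0) = (\<lambda>_. 0)" "D_act P (uu \<Psi> (Suc n)) = (\<lambda>l. of_nat (Suc n) * uu \<Psi> n l)"
proof -
  have h: "hb 0 \<Psi>" by (rule ohm_hb[OF assms(1)])
  show z: "D_act P (uu \<Psi> 0) = (\<lambda>_. 0)" using assms by (simp add: uu_def dact_one)
  show "D_act P (uu \<Psi> (Suc n)) = (\<lambda>l. of_nat (Suc n) * uu \<Psi> n l)"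
  proof (induction n)
    case 0
    show ?case unfolding uu_Suc[OF h] PQ_act[OF uu_hb[OF h]] z by (simp add: dact_zero)
  next
    case (Suc n)
    have "D_act P (uu \<Psi> (Suc (Suc n))) = (\<lambda>l. D_act Q (D_act P (uu \<Psi> (Suc n))) l + uu \<Psi> (Suc n) l)"
      unfolding uu_Suc[OF h, of "Suc n"] by (rule PQ_act[OF uu_hb[OF h]])
    also have "\<dots> = (\<lambda>l. of_nat (Suc (Suc n)) * uu \<Psi> (Suc n) l)"
      unfolding Suc dact_scale[OF bQ uu_hb[OF h]] uu_Suc[OF h, of n, symmetric]
      by (simp add: algebra_simps)
    finally show ?case .
  qed
qed

lemma build_G:
  assumes psi: "\<Psi> \<in> one_plus_Hminus" "D_act P \<Psi> = (\<lambda>_. 0)"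
  shows "\<exists>G. G \<in> Gcal \<and> (\<forall>n. D_act G (zp n) = uu \<Psi> n)"
proof -
  have h: "hb 0 \<Psi>" by (rule ohm_hb[OF psi(1)])
  obtain a where ha: "\<And>n. hb (int n) (a n)" and au: "\<And>n. D_act a (zp n) = uu \<Psi> n"
    using rec_op[of "uu \<Psi>"] uu_hb[OF h] by blast
  have a0: "a 0 = \<Psi>"
  proof
    fix l show "a 0 l = \<Psi> l" using au[of 0] by (simp add: fun_eq_iff dact_zp uu_def dact_one)
  qed
  have pos: "N \<ge> 1 \<Longrightarrow> 0 \<le> l \<Longrightarrow> a N l = 0" for N l
  proof (induction N arbitrary: l rule: less_induct)
    case (less N)
    define M where "M = N - 1"
    have NM: "N = Suc M" using less.prems unfolding M_def by simp
    have Bp: "trunc N a i l' = 0" if "i \<le> M" "1 \<le> l'" for i l'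
    proof (cases "i = 0")
      case True then show ?thesis using ha[of 0] that by (auto simp: trunc_def hb_def)
    next
      case False then show ?thesis using less.IH[of i l'] that NM by (auto simp: trunc_def)
    qed
    have bt: "bnd (int N) (trunc N a)" by (rule bnd_trunc[OF ha])
    have b1: "bnd (int N + 1) (D_mult Q (trunc N a))" using bnd_dmult[OF bQ bt] by (simp add: add.commute)
    have b2: "bnd (int N + 1) (D_mult (trunc N a) D_z)" using bnd_dmult[OF bt bnd_z] by simp
    have "D_sub (D_mult Q (trunc N a)) (D_mult (trunc N a) D_z) m = (\<lambda>_ _. 0) m" if "m \<le> M" for m
    proof (rule faithful_prefix[OF _ that])
      fix n assume n: "n \<le> M"
      then have n1: "n \<le> N" "Suc n \<le> N" using NM by auto
      show "D_act (D_sub (D_mult Q (trunc N a)) (D_mult (trunc N a) D_z)) (zp n) = D_act (\<lambda>_ _. 0) (zp n)"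
        unfolding dact_sub_op[OF b1 b2 hb_zp] composition[OF bQ bt hb_zp] composition[OF bt bnd_z hb_zp]
          z_zp dact_trunc[OF n1(1)] dact_trunc[OF n1(2)] au uu_Suc[OF h] dact_zero_op by simp
    qed
    then have "D_mult Q (trunc N a) M l = D_mult (trunc N a) D_z M l"
      by (metis D_sub_def eq_iff_diff_eq_0 order_refl)
    moreover have "D_mult Q (trunc N a) M l = trunc N a M (l - 1)"
      by (rule dmult_Q_left) (use Bp less.prems in auto)
    ultimately have "of_nat (M + 1) * trunc N a (M + 1) l = 0"
      by (simp add: dmult_z_right)
    moreover have "(of_nat (M + 1) :: complex) \<noteq> 0" by (simp only: of_nat_eq_0_iff)
    ultimately have "trunc N a (M + 1) l = 0" by simp
    then show ?case using NM by (simp add: trunc_def)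
  qed
  have aG: "a \<in> Gcal"
    unfolding Gcal_def Dminus_def D_sub_def
  proof (intro CollectI conjI allI impI)
    show "a \<in> Dset" using ha by (auto simp: Dset_def intro: hb_Hset)
    fix m k assume k: "0 \<le> (k::int)"
    show "a m k - D_one m k = 0"
    proof (cases "m = 0")
      case True
      then show ?thesis using psi(1) a0 k by (cases "k = 0") (auto simp: D_one_def one_plus_Hminus_def)
    next
      case False then show ?thesis using pos[of m k] k by (simp add: D_one_def)
    qed
  qed
  with au show ?thesis by blast
qed

lemma backward:
  assumes psi: "\<Psi> \<in> one_plus_Hminus" "D_act P \<Psi> = (\<lambda>_. 0)"
  shows "lin_span (range (\<lambda>n. D_act (D_pow Q n) \<Psi>)) \<in> Gr0 \<and>
         rho (lin_span (range (\<lambda>n. D_act (D_pow Q n) \<Psi>))) = (P, Q)"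
proof -
  have h: "hb 0 \<Psi>" by (rule ohm_hb[OF psi(1)])
  obtain G where G: "G \<in> Gcal" and Gu: "\<And>n. D_act G (zp n) = uu \<Psi> n"
    using build_G[OF psi] by blast
  have bG: "bnd 0 G" by (rule gcal_bnd[OF G])
  have V: "lin_span (range (\<lambda>n. D_act (D_pow Q n) \<Psi>)) = D_act G ` Hplus"
    using span_eq[OF G] Gu by (simp add: uu_def)
  have QG: "D_mult Q G = D_mult G D_z"
  proof (rule faithful)
    fix n show "D_act (D_mult Q G) (zp n) = D_act (D_mult G D_z) (zp n)"
      by (simp add: composition[OF bQ bG hb_zp] composition[OF bG bnd_z hb_zp] Gu z_zp uu_Suc[OF h])
  qed
  have PG: "D_mult P G = D_mult G D_del"
  proof (rule faithful)
    fix n show "D_act (D_mult P G) (zp n) = D_act (D_mult G D_del) (zp n)"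
    proof (cases n)
      case 0 then show ?thesis
        by (simp add: composition[OF bP bG hb_zp] composition[OF bG bnd_del hb_zp] Gu del_zp0 dact_zero uu_P[OF psi])
    next
      case (Suc m) then show ?thesis
        by (simp add: composition[OF bP bG hb_zp] composition[OF bG bnd_del hb_zp] Gu del_zpS
            dact_scale[OF bG hb_zp] uu_P[OF psi])
    qed
  qed
  have G'G: "G_inv G \<in> Gcal" "D_mult G (G_inv G) = D_one" using ginv[OF G] by auto
  have bG': "bnd 0 (G_inv G)" by (rule gcal_bnd[OF G'G(1)])
  have "QQ G = D_mult (D_mult G D_z) (G_inv G)" unfolding QQ_def by (rule assoc[OF bG bnd_z bG', symmetric])
  also have "\<dots> = D_mult Q (D_mult G (G_inv G))" unfolding QG[symmetric] by (rule assoc[OF bQ bG bG'])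
  also have "\<dots> = Q" using G'G(2) mult_one_right[OF bQ] by simp
  finally have QQ: "QQ G = Q" .
  have "PP G = D_mult (D_mult G D_del) (G_inv G)" unfolding PP_def by (rule assoc[OF bG bnd_del bG', symmetric])
  also have "\<dots> = D_mult P (D_mult G (G_inv G))" unfolding PG[symmetric] by (rule assoc[OF bP bG bG'])
  also have "\<dots> = P" using G'G(2) mult_one_right[OF bP] by simp
  finally have PP: "PP G = P" .
  have "sato (D_act G ` Hplus) = G" by (rule sato_of[OF G])
  then have "rho (D_act G ` Hplus) = (P, Q)"
    by (simp add: rho_def KS_P_def KS_Q_def PP[unfolded PP_def] QQ[unfolded QQ_def])
  with gcal_Gr0[OF G] V show ?thesis by simp
qed

end

theorem theorem1p1:
  shows "bij_betw rho Gr0 GrD \<and>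
    (\<forall>P Q. (P, Q) \<in> GrD \<longrightarrow>
       (\<exists>!\<Psi>. \<Psi> \<in> one_plus_Hminus \<and> D_act P \<Psi> = (\<lambda>_. 0)) \<and>
       (\<forall>\<Psi>. \<Psi> \<in> one_plus_Hminus \<and> D_act P \<Psi> = (\<lambda>_. 0) \<longrightarrow>
          lin_span (range (\<lambda>n. D_act (D_pow Q n) \<Psi>)) \<in> Gr0 \<and>
          rho (lin_span (range (\<lambda>n. D_act (D_pow Q n) \<Psi>))) = (P, Q)))"
proof (intro conjI allI impI)
  have rhoW: "rho W = (PP (sato W), QQ (sato W))" for W
    by (simp add: rho_def KS_P_def KS_Q_def PP_def QQ_def)
  show "bij_betw rho Gr0 GrD"
    unfolding bij_betw_def
  proof (intro conjI)
    show "inj_on rho Gr0"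
    proof (rule inj_onI)
      fix W1 W2 assume W1: "W1 \<in> Gr0" and W2: "W2 \<in> Gr0" and e: "rho W1 = rho W2"
      define G1 where "G1 = sato W1"
      define G2 where "G2 = sato W2"
      have G1: "G1 \<in> Gcal" "W1 = D_act G1 ` Hplus" unfolding G1_def using sato[OF W1] by auto
      have G2: "G2 \<in> Gcal" "W2 = D_act G2 ` Hplus" unfolding G2_def using sato[OF W2] by auto
      have ePP: "PP G1 = PP G2" and eQQ: "QQ G1 = QQ G2" using e unfolding rhoW G1_def G2_def by auto
      have PQ: "(PP G1, QQ G1) \<in> GrD" by (rule PQ_GrD[OF G1(1)])
      have "D_act G1 (zp 0) = D_act G2 (zp 0)"
        by (rule psi_unique[OF PQ psi_fwd[OF G1(1)] psi_fwd_ker[OF G1(1)] psi_fwd[OF G2(1)]])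
          (use psi_fwd_ker[OF G2(1)] ePP in simp)
      then have "D_act G1 (zp n) = D_act G2 (zp n)" for n
        using pow_fwd[OF G1(1), of n] pow_fwd[OF G2(1), of n] eQQ by simp
      then have "G1 = G2" by (rule faithful)
      then show "W1 = W2" using G1(2) G2(2) by simp
    qed
  next
    show "rho ` Gr0 = GrD"
    proof
      show "rho ` Gr0 \<subseteq> GrD" using PQ_GrD sato(1) rhoW by auto
    next
      show "GrD \<subseteq> rho ` Gr0"
      proof
        fix x assume x: "x \<in> GrD"
        obtain P Q where xe: "x = (P, Q)" by (metis prod.exhaust)
        have PQ: "(P, Q) \<in> GrD" using x xe by simp
        obtain \<Psi> where "\<Psi> \<in> one_plus_Hminus" "D_act P \<Psi> = (\<lambda>_. 0)" using psi_ex[OF PQ] by blast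
        from backward[OF PQ this] show "x \<in> rho ` Gr0" unfolding xe by (metis image_eqI)
      qed
    qed
  qed
next
  fix P Q assume PQ: "(P, Q) \<in> GrD"
  show "\<exists>!\<Psi>. \<Psi> \<in> one_plus_Hminus \<and> D_act P \<Psi> = (\<lambda>_. 0)"
    using psi_ex[OF PQ] psi_unique[OF PQ] by blast
  fix \<Psi> assume "\<Psi> \<in> one_plus_Hminus \<and> D_act P \<Psi> = (\<lambda>_. 0)"
  then show "lin_span (range (\<lambda>n. D_act (D_pow Q n) \<Psi>)) \<in> Gr0"
    "rho (lin_span (range (\<lambda>n. D_act (D_pow Q n) \<Psi>))) = (P, Q)"
    using backward[OF PQ] by auto
qed

end
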